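(* Fix $K$ sufficiently large (as required for $\mathcal L_x(\Lambda_K^x)\subset\Lambda^{fx}_{\zeta K}$ for all $x$). For $x\in X$, $n\in\mathbb N$ and Borel probability measures $\sigma_n$ on $Y_{f^nx}$, define the probability measure $\nu_{x,n}=\dfrac{(\mathcal L_x^n)^*\sigma_n}{\langle\mathbb 1,(\mathcal L_x^n)^*\sigma_n\rangle}$ on $Y_x$. There is $C_1>0$ and $\tau\in(0,1)$ such that for all $k\in\mathbb N$, all $m,n\ge k$ and all $\psi\in\Lambda_K^x$, $$\Big|\int\psi\,d\nu_{x,n}-\int\psi\,d\nu_{x,m}\Big|\le C_1\|\psi\|_\infty\tau^k.$$ In particular $\langle\psi,\nu_x\rangle:=\lim_{n\to\infty}\langle\psi,\nu_{x,n}\rangle$ exists and defines a probability measure $\nu_x$ on $Y_x$ with $|\int\psi\,d\nu_{x,n}-\int\psi\,d\nu_x|\le C_1\|\psi\|_\infty\tau^n$.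
   Context: Standing setting. $X$ and $Y$ are compact connected Riemannian manifolds, $X\times Y$ has the metric $d((x,y),(x',y'))=d_X(x,x')+d_Y(y,y')$. $F(x,y)=(f(x),g_x(y))$ is a skew product which is a Lipschitz local homeomorphism; $Y_x=\{x\}\times Y$ is identified with $Y$. $f$ is uniformly expanding with expansion constant $\gamma>1$. Every $y$ has exactly $d$ preimages under each $g_x$. There is a continuous function $L(\cdot,\cdot)$ such that each $z$ has a neighbourhood $U_z$ on which $F$ is injective and the inverse of $F|_{U_z}$ is $L(z)$-Lipschitz on $F(U_z)$. There are $L\ge1$ and open $\mathcal A\subset X\times Y$ with: (A1) $L(z)\le L$ on $\mathcal A$ and $L(z)<\gamma^{-1}$ off $\mathcal A$; (A2) a finite cover $\mathcal U$ of $X\times Y$ by open sets on which $F$ is injective, with $\mathcal A$ covered by $q<d$ elements of $\mathcal U$ and each element of $\mathcal U$ meeting at most one curve of $F^{-1}(c)$ for every distance-minimizing geodesic $c$. The potential $\varphi$ is $\alpha$-Hölder ($0<\alpha<1$) satisfying (P): $\sup\varphi-\inf\varphi<\varepsilon_\varphi$ and $|e^\varphi|_\alpha<\varepsilon_\varphi e^{\inf\varphi}$, where $\varepsilon_\varphi>0$ satisfies $s:=e^{\varepsilon_\varphi}\frac{(d-q)\gamma^{-\alpha}+qL^\alpha}{d}<1$ and $\zeta:=s+2s\varepsilon_\varphi\,\mathrm{diam}(Y)^\alpha<1$. Fiberwise operators: $\mathcal L_x\psi(y)=\sum_{\bar y\in g_x^{-1}(y)}e^{\varphi(x,\bar y)}\psi(\bar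 y)$ from $C(Y_x)$ to $C(Y_{fx})$, $\mathcal L_x^n=\mathcal L_{f^{n-1}x}\circ\cdots\circ\mathcal L_x$, and $(\mathcal L_x^n)^*$ the dual on measures. Cones: $\Lambda_K^x=\{\psi\colon Y_x\to(0,\infty)\ \alpha\text{-Hölder}:|\psi|_\alpha\le K\inf\psi\}\cup\{0\}$, with $|\psi|_\alpha$ the $\alpha$-Hölder seminorm. *)

theory Defs
  imports "HOL-Probability.Probability"
begin

definition pdist :: "('x::metric_space \<times> 'y::metric_space) \<Rightarrow> ('x \<times> 'y) \<Rightarrow> real" where
  "pdist z w = dist (fst z) (fst w) + dist (snd z) (snd w)"

definition min_geodesic :: "('a \<Rightarrow> 'a \<Rightarrow> real) \<Rightarrow> (real \<Rightarrow> 'a) \<Rightarrow> real \<Rightarrow> real \<Rightarrow> bool" where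
  "min_geodesic dd c a b \<longleftrightarrow> a \<le> b \<and> (\<forall>s\<in>{a..b}. \<forall>t\<in>{a..b}. dd (c s) (c t) = \<bar>s - t\<bar>)"

text \<open>Abstraction of a compact connected Riemannian manifold: a compact connected
  metric space in which any two points are joined by a distance-minimizing geodesic.\<close>
definition compact_conn_geodesic_space :: "'a::metric_space itself \<Rightarrow> bool" where
  "compact_conn_geodesic_space _ \<longleftrightarrow> compact (UNIV::'a set) \<and> connected (UNIV::'a set) \<and>
     (\<forall>p q::'a. \<exists>c. c 0 = p \<and> c (dist p q) = q \<and> min_geodesic dist c 0 (dist p q))"

definition holder :: "('a \<Rightarrow> 'a \<Rightarrow> real) \<Rightarrow> real \<Rightarrow> ('a \<Rightarrow> real) \<Rightarrow> bool" where
  "holder dd \<alpha> \<psi> \<longleftrightarrow> (\<exists>C. \<forall>a b. \<bar>\<psi> a - \<psi> b\<bar> \<le> C * dd a b powr \<alpha>)"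

definition holder_semi :: "('a \<Rightarrow> 'a \<Rightarrow> real) \<Rightarrow> real \<Rightarrow> ('a \<Rightarrow> real) \<Rightarrow> real" where
  "holder_semi dd \<alpha> \<psi> = Sup ({0} \<union> {\<bar>\<psi> a - \<psi> b\<bar> / dd a b powr \<alpha> | a b. a \<noteq> b})"

definition sup_norm :: "('a \<Rightarrow> real) \<Rightarrow> real" where
  "sup_norm \<psi> = Sup (range (\<lambda>a. \<bar>\<psi> a\<bar>))"

definition skew :: "('x \<Rightarrow> 'x) \<Rightarrow> ('x \<Rightarrow> 'y \<Rightarrow> 'y) \<Rightarrow> 'x \<times> 'y \<Rightarrow> 'x \<times> 'y" where
  "skew f g z = (f (fst z), g (fst z) (snd z))"

definition lipschitz_local_homeo :: "('a::metric_space \<Rightarrow> 'a \<Rightarrow> real) \<Rightarrow> ('a \<Rightarrow> 'a) \<Rightarrow> bool" where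
  "lipschitz_local_homeo dd F \<longleftrightarrow> (\<exists>C. \<forall>z w. dd (F z) (F w) \<le> C * dd z w) \<and>
     (\<forall>z. \<exists>U h. open U \<and> z \<in> U \<and> open (F ` U) \<and> homeomorphism U (F ` U) F h)"

definition unif_expanding :: "('x::metric_space \<Rightarrow> 'x) \<Rightarrow> real \<Rightarrow> bool" where
  "unif_expanding f \<gamma> \<longleftrightarrow> \<gamma> > 1 \<and>
     (\<exists>\<delta>>0. \<forall>a b. dist a b < \<delta> \<longrightarrow> \<gamma> * dist a b \<le> dist (f a) (f b))"

definition s_const :: "real \<Rightarrow> nat \<Rightarrow> nat \<Rightarrow> real \<Rightarrow> real \<Rightarrow> real \<Rightarrow> real" where
  "s_const \<epsilon> d q \<gamma> Lc \<alpha> =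
     exp \<epsilon> * ((real d - real q) * \<gamma> powr (-\<alpha>) + real q * Lc powr \<alpha>) / real d"

definition zeta_const :: "real \<Rightarrow> nat \<Rightarrow> nat \<Rightarrow> real \<Rightarrow> real \<Rightarrow> real \<Rightarrow> real" where
  "zeta_const \<epsilon> d q \<gamma> Lc \<alpha> =
     s_const \<epsilon> d q \<gamma> Lc \<alpha>
     + 2 * s_const \<epsilon> d q \<gamma> Lc \<alpha> * \<epsilon> * diameter (UNIV::'y::metric_space set) powr \<alpha>"

definition standing_setting ::
  "('x::metric_space \<Rightarrow> 'x) \<Rightarrow> ('x \<Rightarrow> 'y::metric_space \<Rightarrow> 'y) \<Rightarrow> real \<Rightarrow> nat \<Rightarrow>
   ('x \<times> 'y \<Rightarrow> real) \<Rightarrow> real \<Rightarrow> ('x \<times> 'y) set \<Rightarrow> ('x \<times> 'y) set set \<Rightarrow> nat \<Rightarrow>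
   ('x \<times> 'y \<Rightarrow> real) \<Rightarrow> real \<Rightarrow> real \<Rightarrow> bool" where
  "standing_setting f g \<gamma> d Lf Lc A \<U> q \<phi> \<alpha> \<epsilon> \<longleftrightarrow>
     compact_conn_geodesic_space TYPE('x) \<and> compact_conn_geodesic_space TYPE('y) \<and>
     lipschitz_local_homeo pdist (skew f g) \<and>
     unif_expanding f \<gamma> \<and>
     (\<forall>x y. finite (g x -` {y}) \<and> card (g x -` {y}) = d) \<and>
     continuous_on UNIV Lf \<and>
     (\<forall>z. \<exists>U. open U \<and> z \<in> U \<and> inj_on (skew f g) U \<and>
        (\<forall>a\<in>U. \<forall>b\<in>U. pdist a b \<le> Lf z * pdist (skew f g a) (skew f g b))) \<and>
     \<comment> \<open>(A1)\<close>
     Lc \<ge> 1 \<and> open A \<and> (\<forall>z\<in>A. Lf z \<le> Lc) \<and> (\<forall>z. z \<notin> A \<longrightarrow> Lf z < 1 / \<gamma>) \<and>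
     \<comment> \<open>(A2)\<close>
     finite \<U> \<and> \<Union>\<U> = UNIV \<and> (\<forall>U\<in>\<U>. open U \<and> inj_on (skew f g) U) \<and>
     (\<exists>\<V>\<subseteq>\<U>. card \<V> = q \<and> A \<subseteq> \<Union>\<V>) \<and> q < d \<and>
     (\<forall>c a b. min_geodesic pdist c a b \<longrightarrow>
        (\<forall>U\<in>\<U>. \<forall>C1\<in>components (skew f g -` (c ` {a..b})).
           \<forall>C2\<in>components (skew f g -` (c ` {a..b})).
           C1 \<inter> U \<noteq> {} \<longrightarrow> C2 \<inter> U \<noteq> {} \<longrightarrow> C1 = C2)) \<and>
     \<comment> \<open>the potential and (P)\<close>
     0 < \<alpha> \<and> \<alpha> < 1 \<and> holder pdist \<alpha> \<phi> \<and> \<epsilon> > 0 \<and>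
     Sup (range \<phi>) - Inf (range \<phi>) < \<epsilon> \<and>
     holder_semi pdist \<alpha> (\<lambda>z. exp (\<phi> z)) < \<epsilon> * exp (Inf (range \<phi>)) \<and>
     s_const \<epsilon> d q \<gamma> Lc \<alpha> < 1 \<and> zeta_const TYPE('y) \<epsilon> d q \<gamma> Lc \<alpha> < 1"

definition Lop :: "('x \<Rightarrow> 'y \<Rightarrow> 'y) \<Rightarrow> ('x \<times> 'y \<Rightarrow> real) \<Rightarrow> 'x \<Rightarrow> ('y \<Rightarrow> real) \<Rightarrow> 'y \<Rightarrow> real" where
  "Lop g \<phi> x \<psi> y = (\<Sum>yb\<in>g x -` {y}. exp (\<phi> (x, yb)) * \<psi> yb)"

fun Lpow :: "('x \<Rightarrow> 'x) \<Rightarrow> ('x \<Rightarrow> 'y \<Rightarrow> 'y) \<Rightarrow> ('x \<times> 'y \<Rightarrow> real) \<Rightarrow> nat \<Rightarrow> 'x \<Rightarrow> ('y \<Rightarrow> real) \<Rightarrow> 'y \<Rightarrow> real" where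
  "Lpow f g \<phi> 0 x \<psi> = \<psi>"
| "Lpow f g \<phi> (Suc n) x \<psi> = Lop g \<phi> ((f ^^ n) x) (Lpow f g \<phi> n x \<psi>)"

text \<open>The hcone Lambda_K (the same on every fibre Y_x, identified with Y).\<close>
definition hcone :: "real \<Rightarrow> real \<Rightarrow> ('y::metric_space \<Rightarrow> real) set" where
  "hcone \<alpha> K = {\<psi>. (\<forall>y. \<psi> y > 0) \<and> holder dist \<alpha> \<psi> \<and>
                   holder_semi dist \<alpha> \<psi> \<le> K * Inf (range \<psi>)} \<union> {\<lambda>_. 0}"

text \<open>Integral of psi against nu_{x,n} = (L_x^n)^* sigma / <1,(L_x^n)^* sigma>, via the duality
  <psi,(L_x^n)^* sigma> = <L_x^n psi, sigma>.\<close>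
definition nu_int :: "('x \<Rightarrow> 'x) \<Rightarrow> ('x \<Rightarrow> 'y \<Rightarrow> 'y) \<Rightarrow> ('x \<times> 'y \<Rightarrow> real) \<Rightarrow> 'x \<Rightarrow> nat \<Rightarrow>
     'y measure \<Rightarrow> ('y \<Rightarrow> real) \<Rightarrow> real" where
  "nu_int f g \<phi> x n \<sigma> \<psi> =
     (\<integral>y. Lpow f g \<phi> n x \<psi> y \<partial>\<sigma>) / (\<integral>y. Lpow f g \<phi> n x (\<lambda>_. 1) y \<partial>\<sigma>)"

end

theory Submission
  imports Defs
begin


lemma powr_dist_pos: "a \<noteq> b \<Longrightarrow> 0 < dist a b powr \<alpha>"
  by simp

lemma holder_semi_props:
  fixes u :: "'y::metric_space \<Rightarrow> real"
  assumes h: "holder dist \<alpha> u"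
  shows "holder_semi dist \<alpha> u \<ge> 0"
    and "\<bar>u a - u b\<bar> \<le> holder_semi dist \<alpha> u * dist a b powr \<alpha>"
proof -
  obtain C where C: "\<And>a b. \<bar>u a - u b\<bar> \<le> C * dist a b powr \<alpha>"
    using h unfolding holder_def by blast
  define S where "S = ({0} \<union> {\<bar>u a - u b\<bar> / dist a b powr \<alpha> | a b. a \<noteq> b})"
  have bdd: "bdd_above S"
  proof (rule bdd_aboveI[of _ "max C 0"])
    fix s assume "s \<in> S"
    then consider "s = 0" | a b where "a \<noteq> b" "s = \<bar>u a - u b\<bar> / dist a b powr \<alpha>"
      unfolding S_def by blast
    then show "s \<le> max C 0"
    proof cases
      case 2
      have "s \<le> C" using C[of a b] 2 by (simp add: divide_le_eq)
      then show ?thesis by simp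
    qed simp
  qed
  have hs: "holder_semi dist \<alpha> u = Sup S" unfolding holder_semi_def S_def by simp
  show g0: "holder_semi dist \<alpha> u \<ge> 0" unfolding hs
    by (rule cSup_upper[OF _ bdd]) (simp add: S_def)
  show "\<bar>u a - u b\<bar> \<le> holder_semi dist \<alpha> u * dist a b powr \<alpha>"
  proof (cases "a = b")
    case True then show ?thesis using g0 by simp
  next
    case False
    have "\<bar>u a - u b\<bar> / dist a b powr \<alpha> \<le> Sup S"
      by (rule cSup_upper[OF _ bdd]) (use False in \<open>auto simp: S_def\<close>)
    then show ?thesis using False unfolding hs by (simp add: divide_le_eq)
  qed
qed

lemma holder_semi_le:
  fixes u :: "'y::metric_space \<Rightarrow> real"
  assumes "\<And>a b. a \<noteq> b \<Longrightarrow> \<bar>u a - u b\<bar> \<le> B * dist a b powr \<alpha>" "B \<ge> 0"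
  shows "holder_semi dist \<alpha> u \<le> B"
  unfolding holder_semi_def
proof (rule cSup_least)
  fix s assume "s \<in> {0} \<union> {\<bar>u a - u b\<bar> / dist a b powr \<alpha> | a b. a \<noteq> b}"
  then show "s \<le> B" using assms by (auto simp: divide_le_eq)
qed auto

lemma holderI2:
  "(\<And>a b. \<bar>u a - u b\<bar> \<le> B * dist a b powr \<alpha>) \<Longrightarrow> holder dist \<alpha> u"
  unfolding holder_def by blast

lemma holder_lin:
  fixes u v :: "'y::metric_space \<Rightarrow> real"
  assumes "holder dist \<alpha> u" "holder dist \<alpha> v"
  shows "holder dist \<alpha> (\<lambda>y. c + s * u y + t * v y)"
    and "holder_semi dist \<alpha> (\<lambda>y. c + s * u y + t * v y)
          \<le> \<bar>s\<bar> * holder_semi dist \<alpha> u + \<bar>t\<bar> * holder_semi dist \<alpha> v"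
proof -
  have b: "\<bar>(c + s * u a + t * v a) - (c + s * u b + t * v b)\<bar>
      \<le> (\<bar>s\<bar> * holder_semi dist \<alpha> u + \<bar>t\<bar> * holder_semi dist \<alpha> v) * dist a b powr \<alpha>" for a b
  proof -
    have "\<bar>(c + s * u a + t * v a) - (c + s * u b + t * v b)\<bar> = \<bar>s * (u a - u b) + t * (v a - v b)\<bar>"
      by (simp add: algebra_simps)
    also have "\<dots> \<le> \<bar>s\<bar> * \<bar>u a - u b\<bar> + \<bar>t\<bar> * \<bar>v a - v b\<bar>"
      by (metis abs_mult abs_triangle_ineq)
    also have "\<dots> \<le> \<bar>s\<bar> * (holder_semi dist \<alpha> u * dist a b powr \<alpha>) + \<bar>t\<bar> * (holder_semi dist \<alpha> v * dist a b powr \<alpha>)"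
      by (intro add_mono mult_left_mono holder_semi_props assms) auto
    finally show ?thesis by (simp add: algebra_simps)
  qed
  show "holder dist \<alpha> (\<lambda>y. c + s * u y + t * v y)" by (rule holderI2[OF b])
  show "holder_semi dist \<alpha> (\<lambda>y. c + s * u y + t * v y)
          \<le> \<bar>s\<bar> * holder_semi dist \<alpha> u + \<bar>t\<bar> * holder_semi dist \<alpha> v"
    using holder_semi_props(1)[OF assms(1)] holder_semi_props(1)[OF assms(2)]
    by (intro holder_semi_le[OF b]) simp
qed

definition Dm :: "'y::metric_space itself \<Rightarrow> real \<Rightarrow> real" where
  "Dm _ \<alpha> = diameter (UNIV::'y set) powr \<alpha>"

lemma dist_powr_le_Dm:
  fixes a b :: "'y::metric_space"
  assumes "bounded (UNIV::'y set)" "\<alpha> \<ge> 0"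
  shows "dist a b powr \<alpha> \<le> Dm TYPE('y) \<alpha>"
  unfolding Dm_def
  by (rule powr_mono2) (use assms diameter_bounded_bound in auto)

lemma Dm_nonneg: "Dm TYPE('y::metric_space) \<alpha> \<ge> 0"
  unfolding Dm_def by simp

lemma holder_osc:
  fixes u :: "'y::metric_space \<Rightarrow> real"
  assumes "holder dist \<alpha> u" "bounded (UNIV::'y set)" "\<alpha> \<ge> 0"
  shows "u a \<le> u b + holder_semi dist \<alpha> u * Dm TYPE('y) \<alpha>"
proof -
  have "u a - u b \<le> holder_semi dist \<alpha> u * dist a b powr \<alpha>"
    using holder_semi_props(2)[OF assms(1), of a b] by linarith
  also have "\<dots> \<le> holder_semi dist \<alpha> u * Dm TYPE('y) \<alpha>"
    by (intro mult_left_mono dist_powr_le_Dm holder_semi_props assms)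
  finally show ?thesis by linarith
qed

lemma holder_bdd:
  fixes u :: "'y::metric_space \<Rightarrow> real"
  assumes "holder dist \<alpha> u" "bounded (UNIV::'y set)" "\<alpha> \<ge> 0"
  shows "bdd_above (range u)" "bdd_below (range u)"
proof -
  show "bdd_above (range u)"
    using holder_osc[OF assms, of _ undefined] by (auto intro!: bdd_aboveI)
  have "u undefined - holder_semi dist \<alpha> u * Dm TYPE('y) \<alpha> \<le> u b" for b
    using holder_osc[OF assms, of undefined b] by simp
  then show "bdd_below (range u)" by (auto intro!: bdd_belowI)
qed

lemma holder_sup_inf:
  fixes u :: "'y::metric_space \<Rightarrow> real"
  assumes "holder dist \<alpha> u" "bounded (UNIV::'y set)" "\<alpha> \<ge> 0"
  shows "Sup (range u) \<le> Inf (range u) + holder_semi dist \<alpha> u * Dm TYPE('y) \<alpha>"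
proof -
  have "\<forall>b. Sup (range u) - holder_semi dist \<alpha> u * Dm TYPE('y) \<alpha> \<le> u b"
  proof
    fix b
    have "Sup (range u) \<le> u b + holder_semi dist \<alpha> u * Dm TYPE('y) \<alpha>"
      by (rule cSup_least) (use holder_osc[OF assms] in auto)
    then show "Sup (range u) - holder_semi dist \<alpha> u * Dm TYPE('y) \<alpha> \<le> u b" by simp
  qed
  then have "Sup (range u) - holder_semi dist \<alpha> u * Dm TYPE('y) \<alpha> \<le> Inf (range u)"
    by (intro cInf_greatest) auto
  then show ?thesis by simp
qed

lemma holder_continuous:
  fixes u :: "'y::metric_space \<Rightarrow> real"
  assumes "holder dist \<alpha> u" "\<alpha> > 0"
  shows "continuous_on UNIV u"
proof -
  obtain C where C: "\<And>a b. \<bar>u a - u b\<bar> \<le> C * dist a b powr \<alpha>"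
    using assms unfolding holder_def by blast
  define C' where "C' = max C 0 + 1"
  have C'pos: "C' > 0" unfolding C'_def by simp
  have C2: "\<bar>u a - u b\<bar> \<le> C' * dist a b powr \<alpha>" for a b
    by (rule order_trans[OF C]) (auto simp: C'_def intro!: mult_right_mono)
  show ?thesis unfolding continuous_on_iff
  proof safe
    fix x and e :: real assume e: "e > 0"
    define d where "d = (e / C') powr (1/\<alpha>)"
    have dpos: "d > 0" using e C'pos by (simp add: d_def)
    have "dist (u x') (u x) < e" if "dist x' x < d" for x'
    proof -
      have "dist x' x powr \<alpha> < d powr \<alpha>"
        using that assms(2) by (intro powr_less_mono2) auto
      also have "d powr \<alpha> = e / C'"
        unfolding d_def using e C'pos assms(2) by (simp add: powr_powr)
      finally have "C' * dist x' x powr \<alpha> < e"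
        using C'pos by (simp add: field_simps)
      then show ?thesis using C2[of x' x] by (simp add: dist_real_def)
    qed
    then show "\<exists>d>0. \<forall>x'\<in>UNIV. dist x' x < d \<longrightarrow> dist (u x') (u x) < e"
      using dpos by blast
  qed
qed


lemma hcone_cases:
  assumes "u \<in> hcone \<alpha> K"
  shows "u = (\<lambda>_. 0) \<or> ((\<forall>y. u y > 0) \<and> holder dist \<alpha> u \<and> holder_semi dist \<alpha> u \<le> K * Inf (range u))"
  using assms unfolding hcone_def by auto

lemma zero_in_hcone[simp]: "(\<lambda>_. 0) \<in> hcone \<alpha> K"
  unfolding hcone_def by auto

lemma hcone_holder: "u \<in> hcone \<alpha> K \<Longrightarrow> holder dist \<alpha> u"
  unfolding hcone_def holder_def by (auto intro: exI[of _ 0])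

lemma hcone_nonneg: "u \<in> hcone \<alpha> K \<Longrightarrow> u y \<ge> 0"
  unfolding hcone_def by (auto intro: less_imp_le)

lemma hcone_Inf_nonneg:
  fixes u :: "'y::metric_space \<Rightarrow> real"
  assumes "u \<in> hcone \<alpha> K" shows "Inf (range u) \<ge> 0"
  by (rule cInf_greatest) (use hcone_nonneg[OF assms] in auto)

lemma hcone_Inf_le:
  fixes u :: "'y::metric_space \<Rightarrow> real"
  assumes "u \<in> hcone \<alpha> K" shows "Inf (range u) \<le> u y"
  by (rule cInf_lower) (use hcone_nonneg[OF assms] in \<open>auto intro!: bdd_belowI[of _ 0]\<close>)

lemma hcone_Sup_ge:
  fixes u :: "'y::metric_space \<Rightarrow> real"
  assumes "u \<in> hcone \<alpha> K" "bounded (UNIV::'y set)" "\<alpha> \<ge> 0"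
  shows "u y \<le> Sup (range u)"
  by (rule cSup_upper) (use holder_bdd(1)[OF hcone_holder[OF assms(1)] assms(2,3)] in auto)

lemma hcone_mono:
  fixes u :: "'y::metric_space \<Rightarrow> real"
  assumes "u \<in> hcone \<alpha> K" "K \<le> K'"
  shows "u \<in> hcone \<alpha> K'"
proof -
  have "K * Inf (range u) \<le> K' * Inf (range u)"
    using hcone_Inf_nonneg[OF assms(1)] assms(2) by (intro mult_right_mono) auto
  then show ?thesis using assms(1) unfolding hcone_def by auto
qed

lemma hcone_Inf_pos:
  fixes u :: "'y::metric_space \<Rightarrow> real"
  assumes "u \<in> hcone \<alpha> K" "u \<noteq> (\<lambda>_. 0)" "bounded (UNIV::'y set)" "\<alpha> > 0" "K \<ge> 0"
  shows "Inf (range u) > 0"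
proof (rule ccontr)
  assume a: "\<not> Inf (range u) > 0"
  from hcone_cases[OF assms(1)] assms(2) have pos: "\<And>y. u y > 0" and h: "holder dist \<alpha> u"
    and s: "holder_semi dist \<alpha> u \<le> K * Inf (range u)" by auto
  have i0: "Inf (range u) = 0" using a hcone_Inf_nonneg[OF assms(1)] by linarith
  have "holder_semi dist \<alpha> u = 0" using s i0 holder_semi_props(1)[OF h] by simp
  then have "u a = u b" for a b using holder_semi_props(2)[OF h, of a b] by simp
  then have "range u = {u undefined}" by auto
  then show False using i0 pos[of undefined] by simp
qed

lemma Lop_lin:
  "Lop g \<phi> x (\<lambda>y. s * u y + t * v y) y = s * Lop g \<phi> x u y + t * Lop g \<phi> x v y"
  unfolding Lop_def by (simp add: sum.distrib sum_distrib_left algebra_simps)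

lemma Lop_diff:
  "Lop g \<phi> x (\<lambda>y. u y - t * v y) = (\<lambda>y. Lop g \<phi> x u y - t * Lop g \<phi> x v y)"
  using Lop_lin[of g \<phi> x 1 u "-t" v] by (auto simp: fun_eq_iff)

lemma Lop_diff2:
  "Lop g \<phi> x (\<lambda>y. t * v y - u y) = (\<lambda>y. t * Lop g \<phi> x v y - Lop g \<phi> x u y)"
  using Lop_lin[of g \<phi> x t v "-1" u] by (auto simp: fun_eq_iff)

lemma cone_sub:
  fixes u v :: "'y::metric_space \<Rightarrow> real"
  assumes bnd: "bounded (UNIV::'y set)" and al: "\<alpha> > 0" and z: "0 \<le> z" "z < 1" and K: "K > 0"
    and u: "u \<in> hcone \<alpha> (z*K)" and v: "v \<in> hcone \<alpha> (z*K)" "v \<noteq> (\<lambda>_. 0)"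
    and t: "t \<ge> 0"
    and key: "2 * t * Sup (range v) * (1 + z*K*Dm TYPE('y) \<alpha>) \<le> (1 - z) * Sup (range u)"
  shows "(\<lambda>y. u y - t * v y) \<in> hcone \<alpha> K"
proof (cases "t = 0")
  case True
  have "u \<in> hcone \<alpha> K" using hcone_mono[OF u] z K by (simp add: mult_le_cancel_right1)
  then show ?thesis using True by simp
next
  case False
  then have tp: "t > 0" using t by simp
  define R where "R = 1 + z*K*Dm TYPE('y) \<alpha>"
  have R1: "R \<ge> 1" unfolding R_def using z K Dm_nonneg[of \<alpha>, where 'y='y] by simp
  from hcone_cases[OF v(1)] v(2) have vpos: "\<And>y. v y > 0" and hv: "holder dist \<alpha> v"
    and sv: "holder_semi dist \<alpha> v \<le> z*K * Inf (range v)" by auto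
  have Sv: "Sup (range v) > 0"
    using hcone_Sup_ge[OF v(1) bnd, of undefined] vpos[of undefined] al by simp
  have Iv: "Inf (range v) \<le> Sup (range v)"
    using hcone_Sup_ge[OF v(1) bnd, of undefined] hcone_Inf_le[OF v(1), of undefined] al by simp
  have unz: "u \<noteq> (\<lambda>_. 0)"
  proof
    assume "u = (\<lambda>_. 0)"
    then have "Sup (range u) = 0" by simp
    then have "2 * t * Sup (range v) * R \<le> 0" using key R_def by simp
    moreover have "2 * t * Sup (range v) * R > 0" using tp Sv R1 by simp
    ultimately show False by simp
  qed
  from hcone_cases[OF u] unz have upos: "\<And>y. u y > 0" and hu: "holder dist \<alpha> u"
    and su: "holder_semi dist \<alpha> u \<le> z*K * Inf (range u)" by auto
  have Iu: "Inf (range u) > 0"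
    using hcone_Inf_pos[OF u unz bnd al] z K by simp
  have SuR: "Sup (range u) \<le> Inf (range u) * R"
  proof -
    have "Sup (range u) \<le> Inf (range u) + holder_semi dist \<alpha> u * Dm TYPE('y) \<alpha>"
      using holder_sup_inf[OF hu bnd] al by simp
    also have "\<dots> \<le> Inf (range u) + z*K * Inf (range u) * Dm TYPE('y) \<alpha>"
      using su Dm_nonneg by (intro add_left_mono mult_right_mono) auto
    finally show ?thesis unfolding R_def by (simp add: algebra_simps)
  qed
  have k2: "2 * t * Sup (range v) \<le> (1 - z) * Inf (range u)"
  proof -
    have "2 * t * Sup (range v) * R \<le> (1 - z) * (Inf (range u) * R)"
      using key SuR z unfolding R_def[symmetric] by (meson diff_ge_0_iff_ge less_imp_le mult_left_mono order_trans)
    then show ?thesis using R1 by (simp add: mult.assoc[symmetric] mult_le_cancel_right)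
  qed
  define w where "w = (\<lambda>y. u y - t * v y)"
  have wlow: "w y \<ge> Inf (range u) - t * Sup (range v)" for y
  proof -
    have "u y \<ge> Inf (range u)" by (rule hcone_Inf_le[OF u])
    moreover have "t * v y \<le> t * Sup (range v)" using hcone_Sup_ge[OF v(1) bnd] al t
      by (intro mult_left_mono) auto
    ultimately show ?thesis unfolding w_def by simp
  qed
  have lowpos: "Inf (range u) - t * Sup (range v) > 0"
  proof -
    have "(1 - z) * Inf (range u) \<le> Inf (range u)" using z Iu by (simp add: mult_left_le_one_le)
    then show ?thesis using k2 Iu by linarith
  qed
  have wpos: "\<forall>y. w y > 0" using wlow lowpos by (meson less_le_trans)
  have weq: "w = (\<lambda>y. 0 + 1 * u y + (-t) * v y)" unfolding w_def by auto
  have hw: "holder dist \<alpha> w" unfolding weq by (rule holder_lin(1)[OF hu hv])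
  have sw: "holder_semi dist \<alpha> w \<le> holder_semi dist \<alpha> u + t * holder_semi dist \<alpha> v"
    unfolding weq using holder_lin(2)[OF hu hv, of 0 1 "-t"] t by simp
  have Iw: "Inf (range w) \<ge> Inf (range u) - t * Sup (range v)"
    by (rule cInf_greatest) (use wlow in auto)
  have "holder_semi dist \<alpha> w \<le> z*K * Inf (range u) + t * (z*K * Inf (range v))"
  proof -
    have "t * holder_semi dist \<alpha> v \<le> t * (z*K * Inf (range v))"
      using sv t by (rule mult_left_mono)
    then show ?thesis using sw su by linarith
  qed
  also have "\<dots> \<le> K * (Inf (range u) - t * Sup (range v))"
  proof -
    have "z * Inf (range u) + t * (z * Inf (range v)) + t * Sup (range v) \<le> Inf (range u)"
    proof -
      have "t * (z * Inf (range v)) \<le> t * Sup (range v)"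
        using Iv z t hcone_Inf_nonneg[OF v(1)] by (intro mult_left_mono) (auto intro: order_trans[OF mult_left_le_one_le])
      then show ?thesis using k2 by (simp add: algebra_simps)
    qed
    then have "K * (z * Inf (range u) + t * (z * Inf (range v)) + t * Sup (range v)) \<le> K * Inf (range u)"
      using K by (intro mult_left_mono) auto
    then show ?thesis by (simp add: algebra_simps)
  qed
  also have "\<dots> \<le> K * Inf (range w)" using Iw K by simp
  finally show ?thesis using wpos hw unfolding hcone_def w_def by auto
qed


lemma const_hcone:
  fixes c :: real assumes "c > 0" "K \<ge> 0"
  shows "(\<lambda>_::'y::metric_space. c) \<in> hcone \<alpha> K"
proof -
  have s: "holder_semi dist \<alpha> (\<lambda>_::'y. c) \<le> 0" by (rule holder_semi_le) auto
  have "Inf (range (\<lambda>_::'y. c)) = c" by simp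
  then show ?thesis using s assms unfolding hcone_def holder_def
    by (auto intro: exI[of _ 0] order_trans[OF _ mult_nonneg_nonneg])
qed

locale coneset =
  fixes f :: "'x \<Rightarrow> 'x" and g :: "'x \<Rightarrow> 'y::metric_space \<Rightarrow> 'y" and \<phi> :: "'x \<times> 'y \<Rightarrow> real"
    and \<alpha> K z :: real
  assumes bnd: "bounded (UNIV::'y set)" and al: "\<alpha> > 0" and z: "0 \<le> z" "z < 1" and K: "K > 0"
    and Kinv: "\<And>x \<psi>. \<psi> \<in> hcone \<alpha> K \<Longrightarrow> Lop g \<phi> x \<psi> \<in> hcone \<alpha> (z*K)"
    and Lpos: "\<And>x \<psi>. \<psi> \<in> hcone \<alpha> K \<Longrightarrow> \<psi> \<noteq> (\<lambda>_. 0) \<Longrightarrow> Lop g \<phi> x \<psi> \<noteq> (\<lambda>_. 0)"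
begin

abbreviation "LP n x \<psi> \<equiv> Lpow f g \<phi> n x \<psi>"
abbreviation "one \<equiv> (\<lambda>_::'y. 1::real)"

definition cc :: real where "cc = (1 - z) / (4 * (1 + z*K*Dm TYPE('y) \<alpha>))"
definition \<theta> :: real where "\<theta> = 1 - cc"

lemma R_ge1: "1 + z*K*Dm TYPE('y) \<alpha> \<ge> 1"
  using z K Dm_nonneg[of \<alpha>, where 'y='y] by simp

lemma cc_bounds: "0 < cc" "cc \<le> 1/4"
proof -
  have R: "1 + z*K*Dm TYPE('y) \<alpha> \<ge> 1" by (rule R_ge1)
  show "0 < cc" unfolding cc_def using z R by simp
  have "(1 - z) / (4 * (1 + z*K*Dm TYPE('y) \<alpha>)) \<le> 1 / 4"
    using z R by (simp add: divide_le_eq field_simps)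
  then show "cc \<le> 1/4" unfolding cc_def .
qed

lemma theta_bounds: "0 < \<theta>" "\<theta> < 1"
  using cc_bounds unfolding \<theta>_def by auto

lemma zK_le: "z*K \<le> K" using z K by (simp add: mult_le_cancel_right1)

lemma Kinv': "\<psi> \<in> hcone \<alpha> K \<Longrightarrow> Lop g \<phi> x \<psi> \<in> hcone \<alpha> K"
  using hcone_mono[OF Kinv zK_le] .

lemma LP_cone: "\<psi> \<in> hcone \<alpha> K \<Longrightarrow> LP n x \<psi> \<in> hcone \<alpha> K"
  by (induction n) (auto intro: Kinv')

lemma one_cone: "one \<in> hcone \<alpha> K" using const_hcone[of 1 K] K by simp

lemma LP_one_nz: "LP n x one \<noteq> (\<lambda>_. 0)"
proof (induction n)
  case 0 then show ?case by (simp add: fun_eq_iff)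
next
  case (Suc n) then show ?case using Lpos[OF LP_cone[OF one_cone]] by simp
qed

definition Inv :: "'x \<Rightarrow> ('y \<Rightarrow> real) \<Rightarrow> nat \<Rightarrow> real \<Rightarrow> real \<Rightarrow> bool" where
  "Inv x \<psi> k a b \<longleftrightarrow> a \<le> b \<and> (\<lambda>y. LP k x \<psi> y - a * LP k x one y) \<in> hcone \<alpha> K
      \<and> (\<lambda>y. b * LP k x one y - LP k x \<psi> y) \<in> hcone \<alpha> K"

lemma propagate:
  assumes "Inv x \<psi> k a b" "k \<le> n"
  shows "(\<lambda>y. LP n x \<psi> y - a * LP n x one y) \<in> hcone \<alpha> K \<and> (\<lambda>y. b * LP n x one y - LP n x \<psi> y) \<in> hcone \<alpha> K"
  using assms(2)
proof (induction n rule: dec_induct)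
  case base then show ?case using assms(1) unfolding Inv_def by auto
next
  case (step n)
  then show ?case
    using Kinv'[of "\<lambda>y. LP n x \<psi> y - a * LP n x one y" "(f^^n) x"]
      Kinv'[of "\<lambda>y. b * LP n x one y - LP n x \<psi> y" "(f^^n) x"]
    by (simp add: Lop_diff Lop_diff2)
qed

lemma pointwise:
  assumes "Inv x \<psi> k a b" "k \<le> n"
  shows "a * LP n x one y \<le> LP n x \<psi> y" "LP n x \<psi> y \<le> b * LP n x one y"
  using hcone_nonneg[OF conjunct1[OF propagate[OF assms]], of y]
    hcone_nonneg[OF conjunct2[OF propagate[OF assms]], of y] by auto

lemma step:
  assumes "\<psi> \<in> hcone \<alpha> K" "Inv x \<psi> k a b"
  shows "\<exists>a' b'. Inv x \<psi> (Suc k) a' b' \<and> b' - a' \<le> \<theta> * (b - a)"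
proof -
  define F where "F = LP k x \<psi>"
  define H where "H = LP k x one"
  define L where "L = Lop g \<phi> ((f^^k) x)"
  have ab: "a \<le> b" using assms(2) unfolding Inv_def by auto
  have u0: "(\<lambda>y. F y - a * H y) \<in> hcone \<alpha> K" and w0: "(\<lambda>y. b * H y - F y) \<in> hcone \<alpha> K"
    using assms(2) unfolding Inv_def F_def H_def by auto
  define u where "u = (\<lambda>y. L F y - a * L H y)"
  define w where "w = (\<lambda>y. b * L H y - L F y)"
  define v where "v = L H"
  have u: "u \<in> hcone \<alpha> (z*K)" using Kinv[OF u0] unfolding u_def L_def by (simp add: Lop_diff)
  have w: "w \<in> hcone \<alpha> (z*K)" using Kinv[OF w0] unfolding w_def L_def by (simp add: Lop_diff2)
  have v: "v \<in> hcone \<alpha> (z*K)" "v \<noteq> (\<lambda>_. 0)"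
    using Kinv[OF LP_cone[OF one_cone]] Lpos[OF LP_cone[OF one_cone] LP_one_nz]
    unfolding v_def L_def H_def by auto
  have uw: "u y + w y = (b - a) * v y" for y unfolding u_def w_def v_def by (simp add: algebra_simps)
  have Su: "u y \<le> Sup (range u)" for y using hcone_Sup_ge[OF u bnd] al by simp
  have Sw: "w y \<le> Sup (range w)" for y using hcone_Sup_ge[OF w bnd] al by simp
  have Sv: "v y \<le> Sup (range v)" for y using hcone_Sup_ge[OF v(1) bnd] al by simp
  have Su0: "Sup (range u) \<ge> 0" using Su[of undefined] hcone_nonneg[OF u, of undefined] by simp
  have Sw0: "Sup (range w) \<ge> 0" using Sw[of undefined] hcone_nonneg[OF w, of undefined] by simp
  have sum: "(b - a) * Sup (range v) \<le> Sup (range u) + Sup (range w)"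
  proof (cases "a = b")
    case True then show ?thesis using Su0 Sw0 by simp
  next
    case False
    then have ba: "b - a > 0" using ab by simp
    have "Sup (range v) \<le> (Sup (range u) + Sup (range w)) / (b - a)"
    proof (rule cSup_least)
      fix s assume "s \<in> range v"
      then obtain y where y: "s = v y" by auto
      have "(b - a) * v y \<le> Sup (range u) + Sup (range w)" using uw[of y] Su[of y] Sw[of y] by simp
      then show "s \<le> (Sup (range u) + Sup (range w)) / (b - a)" using ba y by (simp add: field_simps)
    qed auto
    then show ?thesis using ba by (simp add: field_simps)
  qed
  define t where "t = cc * (b - a)"
  have t0: "t \<ge> 0" using cc_bounds ab unfolding t_def by simp
  have tle: "t \<le> b - a" using cc_bounds ab unfolding t_def by (simp add: mult_left_le_one_le)
  have keyeq: "2 * t * Sup (range v) * (1 + z*K*Dm TYPE('y) \<alpha>) = (1 - z) * ((b - a) * Sup (range v) / 2)"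
    unfolding t_def cc_def using R_ge1 by (simp add: field_simps)
  have LP1: "LP (Suc k) x \<psi> = L F" "LP (Suc k) x one = L H" unfolding L_def F_def H_def by simp_all
  have wid: "(b - a) - t = \<theta> * (b - a)" unfolding t_def \<theta>_def by (simp add: algebra_simps)
  show ?thesis
  proof (cases "Sup (range u) \<ge> (b - a) * Sup (range v) / 2")
    case True
    have key: "2 * t * Sup (range v) * (1 + z*K*Dm TYPE('y) \<alpha>) \<le> (1 - z) * Sup (range u)"
      unfolding keyeq using True z by (intro mult_left_mono) auto
    have c1: "(\<lambda>y. u y - t * v y) \<in> hcone \<alpha> K" by (rule cone_sub[OF bnd al z K u v t0 key])
    have "Inv x \<psi> (Suc k) (a + t) b"
      unfolding Inv_def LP1
    proof (intro conjI)
      show "a + t \<le> b" using tle by simp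
      show "(\<lambda>y. L F y - (a + t) * L H y) \<in> hcone \<alpha> K"
        using c1 unfolding u_def v_def by (simp add: algebra_simps)
      show "(\<lambda>y. b * L H y - L F y) \<in> hcone \<alpha> K"
        using hcone_mono[OF w zK_le] unfolding w_def .
    qed
    then show ?thesis using wid by (intro exI[of _ "a+t"] exI[of _ b]) simp
  next
    case False
    then have F2: "Sup (range w) \<ge> (b - a) * Sup (range v) / 2" using sum by simp
    have key: "2 * t * Sup (range v) * (1 + z*K*Dm TYPE('y) \<alpha>) \<le> (1 - z) * Sup (range w)"
      unfolding keyeq using F2 z by (intro mult_left_mono) auto
    have c1: "(\<lambda>y. w y - t * v y) \<in> hcone \<alpha> K" by (rule cone_sub[OF bnd al z K w v t0 key])
    have "Inv x \<psi> (Suc k) a (b - t)"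
      unfolding Inv_def LP1
    proof (intro conjI)
      show "a \<le> b - t" using tle by simp
      show "(\<lambda>y. L F y - a * L H y) \<in> hcone \<alpha> K"
        using hcone_mono[OF u zK_le] unfolding u_def .
      show "(\<lambda>y. (b - t) * L H y - L F y) \<in> hcone \<alpha> K"
        using c1 unfolding w_def v_def by (simp add: algebra_simps)
    qed
    then show ?thesis using wid by (intro exI[of _ a] exI[of _ "b-t"]) simp
  qed
qed

lemma init:
  assumes "\<psi> \<in> hcone \<alpha> K"
  shows "Inv x \<psi> 0 0 (Sup (range \<psi>) + Inf (range \<psi>))"
proof -
  have "(\<lambda>y. (Sup (range \<psi>) + Inf (range \<psi>)) * 1 - \<psi> y) \<in> hcone \<alpha> K"
  proof (cases "\<psi> = (\<lambda>_. 0)")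
    case True then show ?thesis by simp
  next
    case False
    from hcone_cases[OF assms] False have pos: "\<And>y. \<psi> y > 0" and h: "holder dist \<alpha> \<psi>"
      and s: "holder_semi dist \<alpha> \<psi> \<le> K * Inf (range \<psi>)" by auto
    have Ip: "Inf (range \<psi>) > 0" using hcone_Inf_pos[OF assms False bnd al] K by simp
    define b where "b = Sup (range \<psi>) + Inf (range \<psi>)"
    have weq: "(\<lambda>y. b * 1 - \<psi> y) = (\<lambda>y. b + (-1) * \<psi> y + 0 * \<psi> y)" by auto
    have low: "b - \<psi> y \<ge> Inf (range \<psi>)" for y
      using hcone_Sup_ge[OF assms bnd, of y] al unfolding b_def by simp
    have hw: "holder dist \<alpha> (\<lambda>y. b * 1 - \<psi> y)" unfolding weq by (rule holder_lin(1)[OF h h])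
    have sw: "holder_semi dist \<alpha> (\<lambda>y. b * 1 - \<psi> y) \<le> holder_semi dist \<alpha> \<psi>"
      unfolding weq using holder_lin(2)[OF h h, of b "-1" 0] by simp
    have Iw: "Inf (range (\<lambda>y. b * 1 - \<psi> y)) \<ge> Inf (range \<psi>)"
      by (rule cInf_greatest) (use low in auto)
    have "holder_semi dist \<alpha> (\<lambda>y. b * 1 - \<psi> y) \<le> K * Inf (range (\<lambda>y. b * 1 - \<psi> y))"
      using sw s Iw K by (smt (verit) mult_left_mono)
    moreover have "\<forall>y. b * 1 - \<psi> y > 0" using low Ip by (smt (verit))
    ultimately show ?thesis using hw unfolding hcone_def b_def by auto
  qed
  moreover have "Inf (range \<psi>) \<ge> 0" by (rule hcone_Inf_nonneg[OF assms])
  moreover have "Sup (range \<psi>) \<ge> 0"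
    using hcone_Sup_ge[OF assms bnd, of undefined] hcone_nonneg[OF assms, of undefined] al by simp
  ultimately show ?thesis unfolding Inv_def using assms by simp
qed

lemma core:
  assumes "\<psi> \<in> hcone \<alpha> K"
  shows "\<exists>a b. \<forall>k. Inv x \<psi> k (a k) (b k) \<and> b k - a k \<le> (Sup (range \<psi>) + Inf (range \<psi>)) * \<theta> ^ k"
proof -
  have "\<forall>k p. \<exists>p'. Inv x \<psi> k (fst p) (snd p) \<longrightarrow> Inv x \<psi> (Suc k) (fst p') (snd p') \<and> snd p' - fst p' \<le> \<theta> * (snd p - fst p)"
    using step[OF assms] by fastforce
  then obtain S where S: "\<And>k p. Inv x \<psi> k (fst p) (snd p) \<Longrightarrow> Inv x \<psi> (Suc k) (fst (S k p)) (snd (S k p)) \<and> snd (S k p) - fst (S k p) \<le> \<theta> * (snd p - fst p)"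
    by metis
  define ab where "ab = rec_nat (0, Sup (range \<psi>) + Inf (range \<psi>)) S"
  have "Inv x \<psi> k (fst (ab k)) (snd (ab k)) \<and> snd (ab k) - fst (ab k) \<le> (Sup (range \<psi>) + Inf (range \<psi>)) * \<theta> ^ k" for k
  proof (induction k)
    case 0 then show ?case using init[OF assms] by (simp add: ab_def)
  next
    case (Suc k)
    have e: "ab (Suc k) = S k (ab k)" by (simp add: ab_def)
    have "snd (ab (Suc k)) - fst (ab (Suc k)) \<le> \<theta> * (snd (ab k) - fst (ab k))"
      using S Suc e by auto
    also have "\<dots> \<le> \<theta> * ((Sup (range \<psi>) + Inf (range \<psi>)) * \<theta> ^ k)"
      using Suc theta_bounds by (intro mult_left_mono) auto
    finally show ?case using S Suc e by (simp add: algebra_simps)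
  qed
  then show ?thesis by (intro exI[of _ "\<lambda>k. fst (ab k)"] exI[of _ "\<lambda>k. snd (ab k)"]) auto
qed

end


section \<open>Ternary encoding\<close>

definition tern :: "(nat \<Rightarrow> bool) \<Rightarrow> real" where
  "tern b = (\<Sum>k. (if b k then 2 else 0) / 3 ^ Suc k)"

lemma geo3: "summable (\<lambda>k. c / 3 ^ k :: real)" "(\<Sum>k. c / 3 ^ k :: real) = c * 3 / 2"
proof -
  have s: "summable (\<lambda>k. (1/3::real) ^ k)" by (rule summable_geometric) simp
  have e: "(\<lambda>k. c / 3 ^ k :: real) = (\<lambda>k. c * (1/3) ^ k)" by (simp add: power_divide)
  show "summable (\<lambda>k. c / 3 ^ k :: real)" unfolding e by (rule summable_mult[OF s])
  have "(\<Sum>k. c * (1/3::real) ^ k) = c * (\<Sum>k. (1/3::real) ^ k)" by (rule suminf_mult[OF s])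
  also have "(\<Sum>k. (1/3::real) ^ k) = 3/2" by (subst suminf_geometric) auto
  finally show "(\<Sum>k. c / 3 ^ k :: real) = c * 3 / 2" unfolding e by simp
qed

lemma tern_summable: "summable (\<lambda>k. (if b k then 2 else 0) / 3 ^ Suc k :: real)"
proof (rule summable_comparison_test[OF _ geo3(1)[of 2]])
  have "norm ((if b n then 2 else 0) / 3 ^ Suc n :: real) \<le> 2 / 3 ^ n" for n
    by (auto simp: divide_le_eq field_simps)
  then show "\<exists>N. \<forall>n\<ge>N. norm ((if b n then 2 else 0) / 3 ^ Suc n :: real) \<le> 2 / 3 ^ n" by blast
qed

lemma tern_bounds: "0 \<le> tern b" "tern b \<le> 1"
proof -
  show "0 \<le> tern b" unfolding tern_def by (intro suminf_nonneg tern_summable) auto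
  have s2: "summable (\<lambda>k. 2 / 3 ^ Suc k :: real)"
    using geo3(1)[of "2/3"] by (simp add: divide_divide_eq_left)
  have "tern b \<le> (\<Sum>k. 2 / 3 ^ Suc k)" unfolding tern_def
    by (intro suminf_le tern_summable s2) auto
  also have "(\<Sum>k. 2 / 3 ^ Suc k :: real) = (\<Sum>k. (2/3) / 3 ^ k)" by (simp add: divide_divide_eq_left)
  also have "\<dots> = 1" using geo3(2)[of "2/3"] by simp
  finally show "tern b \<le> 1" .
qed

lemma tern_sep:
  assumes "b i \<noteq> b' i" "\<And>j. j < i \<Longrightarrow> b j = b' j"
  shows "\<bar>tern b - tern b'\<bar> \<ge> 1 / 3 ^ Suc i"
proof -
  define D where "D k = (if b k then 2 else 0) / 3 ^ Suc k - (if b' k then 2 else 0) / (3 ^ Suc k :: real)" for k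
  have sD: "summable D" unfolding D_def by (intro summable_diff tern_summable)
  have td: "tern b - tern b' = suminf D"
    unfolding tern_def D_def by (rule suminf_diff) (rule tern_summable)+
  have split: "suminf D = (\<Sum>n. D (n + Suc i)) + sum D {..<Suc i}"
    by (rule suminf_split_initial_segment[OF sD])
  have "sum D {..<i} = 0" by (rule sum.neutral) (use assms(2) in \<open>auto simp: D_def\<close>)
  then have sDi: "sum D {..<Suc i} = D i" by simp
  have Di: "\<bar>D i\<bar> = 2 / 3 ^ Suc i" using assms(1) by (cases "b i") (auto simp: D_def)
  define Y :: "nat \<Rightarrow> real" where "Y n = (2 / 3 ^ (i + 2)) / 3 ^ n" for n
  have sY: "summable Y" unfolding Y_def by (rule geo3(1))
  have sY': "suminf Y = 1 / 3 ^ Suc i" unfolding Y_def geo3(2) by (simp add: field_simps)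
  have bnd: "\<bar>D (n + Suc i)\<bar> \<le> Y n" for n
  proof -
    have "\<bar>D (n + Suc i)\<bar> \<le> 2 / 3 ^ Suc (n + Suc i)" unfolding D_def by auto
    also have "\<dots> = Y n" unfolding Y_def by (simp add: power_add field_simps)
    finally show ?thesis .
  qed
  have sT: "summable (\<lambda>n. D (n + Suc i))" using sD by (rule summable_ignore_initial_segment)
  have "(\<Sum>n. D (n + Suc i)) \<le> suminf Y" by (rule suminf_le[OF _ sT sY]) (use bnd in \<open>auto simp: abs_le_iff\<close>)
  moreover have "-suminf Y \<le> (\<Sum>n. D (n + Suc i))"
  proof -
    have "(\<Sum>n. - D (n + Suc i)) \<le> suminf Y"
      by (rule suminf_le[OF _ summable_minus[OF sT] sY]) (use bnd in \<open>auto simp: abs_le_iff\<close>)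
    then show ?thesis using suminf_minus[OF sT] by simp
  qed
  ultimately have "\<bar>\<Sum>n. D (n + Suc i)\<bar> \<le> 1 / 3 ^ Suc i" using sY' by simp
  then show ?thesis unfolding td split sDi using Di by linarith
qed

lemma tern_close:
  assumes "\<bar>tern b - tern b'\<bar> < 1 / 3 ^ K" "k < K"
  shows "b k = b' k"
proof (rule ccontr)
  assume "b k \<noteq> b' k"
  define i where "i = (LEAST i. b i \<noteq> b' i)"
  have bi: "b i \<noteq> b' i" unfolding i_def by (rule LeastI[of _ k]) fact
  have ik: "i \<le> k" unfolding i_def by (rule Least_le) fact
  have lt: "\<And>j. j < i \<Longrightarrow> b j = b' j" unfolding i_def using not_less_Least by blast
  have "1 / 3 ^ Suc i \<le> \<bar>tern b - tern b'\<bar>" by (rule tern_sep[of b i b', OF bi lt])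
  moreover have "(1::real) / 3 ^ K \<le> 1 / 3 ^ Suc i"
    using ik assms(2) by (intro divide_left_mono power_increasing) auto
  ultimately show False using assms(1) by linarith
qed


lemma ucont_ext_compact:
  fixes f :: "'a::metric_space \<Rightarrow> 'b::metric_space"
  assumes uc: "uniformly_continuous_on X f" and cpt: "compact (UNIV::'b set)"
  obtains g where "continuous_on (closure X) g" "\<And>x. x \<in> X \<Longrightarrow> g x = f x"
proof -
  have cplt: "\<And>s :: nat \<Rightarrow> 'b. Cauchy s \<Longrightarrow> \<exists>l. s \<longlonglongrightarrow> l"
    using compact_imp_complete[OF cpt] unfolding complete_def by blast
  have ext_at: "\<exists>l. (f \<longlongrightarrow> l) (at x within X)" if "x \<in> closure X" for x
  proof -
    from that obtain xs where xs: "xs \<longlonglongrightarrow> x" "\<And>n. xs n \<in> X"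
      by (auto simp: closure_sequential)
    from cplt[OF uniformly_continuous_on_Cauchy[OF uc LIMSEQ_imp_Cauchy, OF xs]]
    obtain l where l: "(\<lambda>n. f (xs n)) \<longlonglongrightarrow> l" by blast
    have "(f \<longlongrightarrow> l) (at x within X)"
    proof (clarify intro!: Lim_within_LIMSEQ)
      fix xs'
      assume "\<forall>n. xs' n \<noteq> x \<and> xs' n \<in> X"
        and xs': "xs' \<longlonglongrightarrow> x"
      then have "xs' n \<noteq> x" "xs' n \<in> X" for n by auto
      show "(\<lambda>n. f (xs' n)) \<longlonglongrightarrow> l"
      proof (rule tendstoI)
        fix \<epsilon>::real assume "\<epsilon> > 0"
        define e' where "e' \<equiv> \<epsilon>/2"
        have "e' > 0" using \<open>\<epsilon> > 0\<close> by (simp add: e'_def)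
        have "\<forall>\<^sub>F n in sequentially. dist (f (xs n)) l < e'"
          by (simp add: \<open>0 < e'\<close> l tendstoD)
        moreover
        obtain \<delta> where \<delta>: "\<delta> > 0" "\<And>x x'. x \<in> X \<Longrightarrow> x' \<in> X \<Longrightarrow> dist x x' < \<delta> \<Longrightarrow> dist (f x) (f x') < e'"
          by (metis \<open>0 < e'\<close> uc uniformly_continuous_on_def)
        have "\<forall>\<^sub>F n in sequentially. dist (xs n) (xs' n) < \<delta>"
          by (auto intro!: \<open>0 < \<delta>\<close> order_tendstoD tendsto_eq_intros xs xs')
        ultimately
        show "\<forall>\<^sub>F n in sequentially. dist (f (xs' n)) l < \<epsilon>"
        proof eventually_elim
          case (elim n)
          have "dist (f (xs' n)) l \<le> dist (f (xs n)) (f (xs' n)) + dist (f (xs n)) l"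
            by metric
          also have "dist (f (xs n)) (f (xs' n)) < e'"
            by (auto intro!: \<delta> xs \<open>xs' _ \<in> _\<close> elim)
          also note \<open>dist (f (xs n)) l < e'\<close>
          also have "e' + e' = \<epsilon>" by (simp add: e'_def)
          finally show ?case by simp
        qed
      qed
    qed
    then show ?thesis by blast
  qed
  from uc have cont_f: "continuous_on X f"
    by (simp add: uniformly_continuous_imp_continuous)
  obtain y where y: "(f \<longlongrightarrow> y x) (at x within X)" if "x \<in> closure X" for x
    using ext_at by metis
  let ?g = "\<lambda>x. if x \<in> X then f x else y x"
  have "uniformly_continuous_on (closure X) ?g"
    unfolding uniformly_continuous_on_def
  proof safe
    fix \<epsilon>::real assume "\<epsilon> > 0"
    define e' where "e' \<equiv> \<epsilon> / 3"
    have "e' > 0" using \<open>\<epsilon> > 0\<close> by (simp add: e'_def)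
    obtain \<delta> where "\<delta> > 0" and \<delta>: "\<And>x x'. x \<in> X \<Longrightarrow> x' \<in> X \<Longrightarrow> dist x' x < \<delta> \<Longrightarrow> dist (f x') (f x) < e'"
      using \<open>0 < e'\<close> uc uniformly_continuous_onE by blast
    define d' where "d' = \<delta> / 3"
    have "d' > 0" using \<open>\<delta> > 0\<close> by (simp add: d'_def)
    show "\<exists>\<delta>>0. \<forall>x\<in>closure X. \<forall>x'\<in>closure X. dist x' x < \<delta> \<longrightarrow> dist (?g x') (?g x) < \<epsilon>"
    proof (safe intro!: exI[where x=d'] \<open>d' > 0\<close>)
      fix x x' assume x: "x \<in> closure X" and x': "x' \<in> closure X" and dist: "dist x' x < d'"
      then obtain xs xs' where xs: "xs \<longlonglongrightarrow> x" "\<And>n. xs n \<in> X"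
        and xs': "xs' \<longlonglongrightarrow> x'" "\<And>n. xs' n \<in> X"
        by (auto simp: closure_sequential)
      have "\<forall>\<^sub>F n in sequentially. dist (xs' n) x' < d'"
        and "\<forall>\<^sub>F n in sequentially. dist (xs n) x < d'"
        by (auto intro!: \<open>0 < d'\<close> order_tendstoD tendsto_eq_intros xs xs')
      moreover
      have "(\<lambda>x. f (xs x)) \<longlonglongrightarrow> y x" 
        if "x \<in> closure X" "x \<notin> X" "xs \<longlonglongrightarrow> x" "\<And>n. xs n \<in> X" for xs x
        using that not_eventuallyD
        by (force intro!: filterlim_compose[OF y[OF \<open>x \<in> closure X\<close>]] simp: filterlim_at)
      then have "(\<lambda>x. f (xs' x)) \<longlonglongrightarrow> ?g x'" "(\<lambda>x. f (xs x)) \<longlonglongrightarrow> ?g x"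
        using x x'
        by (auto intro!: continuous_on_tendsto_compose[OF cont_f] simp: xs' xs)
      then have "\<forall>\<^sub>F n in sequentially. dist (f (xs' n)) (?g x') < e'"
        "\<forall>\<^sub>F n in sequentially. dist (f (xs n)) (?g x) < e'"
        by (auto intro!: \<open>0 < e'\<close> order_tendstoD tendsto_eq_intros)
      ultimately
      have "\<forall>\<^sub>F n in sequentially. dist (?g x') (?g x) < \<epsilon>"
      proof eventually_elim
        case (elim n)
        have "dist (?g x') (?g x) \<le>
          dist (f (xs' n)) (?g x') + dist (f (xs' n)) (f (xs n)) + dist (f (xs n)) (?g x)"
          by (metis add.commute add_le_cancel_left dist_commute dist_triangle dist_triangle_le)
        also
        from \<open>dist (xs' n) x' < d'\<close> \<open>dist x' x < d'\<close> \<open>dist (xs n) x < d'\<close>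
        have "dist (xs' n) (xs n) < \<delta>" unfolding d'_def by metric
        with \<open>xs _ \<in> X\<close> \<open>xs' _ \<in> X\<close> have "dist (f (xs' n)) (f (xs n)) < e'"
          by (rule \<delta>)
        also note \<open>dist (f (xs' n)) (?g x') < e'\<close>
        also note \<open>dist (f (xs n)) (?g x) < e'\<close>
        finally show ?case by (simp add: e'_def)
      qed
      then show "dist (?g x') (?g x) < \<epsilon>" by simp
    qed
  qed
  then have "continuous_on (closure X) ?g" by (rule uniformly_continuous_imp_continuous)
  then show ?thesis using that by auto
qed


section \<open>Encoding a compact metric space into the reals\<close>

lemma encoding:
  assumes cpt: "compact (UNIV::'y::metric_space set)"
  obtains e :: "'y::metric_space \<Rightarrow> real" where "inj e" "e ` UNIV \<subseteq> {0..1}"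
    "uniformly_continuous_on (range e) (inv e)"
proof -
  have tb: "\<forall>\<epsilon>>0. \<exists>k. finite k \<and> k \<subseteq> (UNIV::'y set) \<and> UNIV \<subseteq> (\<Union>x\<in>k. ball x \<epsilon>)"
    by (rule seq_compact_imp_totally_bounded[OF compact_imp_seq_compact[OF cpt]])
  have "\<forall>j::nat. \<exists>k. finite k \<and> (UNIV::'y set) \<subseteq> (\<Union>x\<in>k. ball x (1/2^j))"
    using tb by (metis divide_pos_pos zero_less_one zero_less_numeral zero_less_power)
  then obtain Fn where Fn: "\<And>j. finite (Fn j)" "\<And>j. (UNIV::'y set) \<subseteq> (\<Union>x\<in>Fn j. ball x (1/2^j))"
    by metis
  define T where "T = Sigma UNIV Fn"
  have Tc: "countable T" unfolding T_def using Fn(1) by (auto intro: countable_finite)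
  have Tne: "T \<noteq> {}" unfolding T_def using Fn(2)[of 0] by auto
  define hh where "hh = from_nat_into T"
  have rh: "range hh = T" unfolding hh_def using Tne Tc by simp
  define bit where "bit k y \<longleftrightarrow> dist (snd (hh k)) y < 1/2^(fst (hh k))" for k y
  have key: "\<exists>K. \<forall>y y'. (\<forall>k<K. bit k y = bit k y') \<longrightarrow> dist y y' < 2/2^j" for j
  proof -
    have "\<forall>z\<in>Fn j. \<exists>k. hh k = (j, z)" using rh unfolding T_def by (metis SigmaI UNIV_I rangeE)
    then obtain idx where idx: "\<And>z. z \<in> Fn j \<Longrightarrow> hh (idx z) = (j, z)" by metis
    obtain K where K: "idx ` Fn j \<subseteq> {..<K}" using finite_nat_bounded[OF finite_imageI[OF Fn(1)]] by blast
    show ?thesis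
    proof (intro exI allI impI)
      fix y y' assume ag: "\<forall>k<K. bit k y = bit k y'"
      obtain z where z: "z \<in> Fn j" "dist z y < 1/2^j" using Fn(2)[of j] by (auto simp: subset_eq)
      have "idx z < K" using K z by auto
      then have "bit (idx z) y'" using ag z idx[OF z(1)] unfolding bit_def by auto
      then have "dist z y' < 1/2^j" using idx[OF z(1)] unfolding bit_def by simp
      then show "dist y y' < 2/2^j" using z(2) by metric
    qed
  qed
  define e where "e y = tern (\<lambda>k. bit k y)" for y
  have close: "\<exists>\<delta>>0. \<forall>y y'. \<bar>e y - e y'\<bar> < \<delta> \<longrightarrow> dist y y' < \<epsilon>" if ep: "\<epsilon> > 0" for \<epsilon>
  proof -
    obtain j :: nat where j: "2/2^j < \<epsilon>"
    proof -
      obtain j where "(1/2::real)^j < \<epsilon>/2" using real_arch_pow_inv[of "\<epsilon>/2" "1/2"] ep by auto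
      then have "2/2^j < \<epsilon>" by (simp add: power_one_over field_simps)
      then show ?thesis using that by blast
    qed
    obtain K where K: "\<forall>y y'. (\<forall>k<K. bit k y = bit k y') \<longrightarrow> dist y y' < 2/2^j" using key by blast
    show ?thesis
    proof (intro exI[of _ "1/3^K"] conjI allI impI)
      fix y y' assume "\<bar>e y - e y'\<bar> < 1/3^K"
      then have "\<forall>k<K. bit k y = bit k y'" unfolding e_def using tern_close by blast
      then show "dist y y' < \<epsilon>" using K j by (meson order.strict_trans)
    qed simp
  qed
  have inj: "inj e"
  proof (rule injI)
    fix y y' assume "e y = e y'"
    then have "dist y y' < \<epsilon>" if "\<epsilon> > 0" for \<epsilon> using close[OF that] by auto
    then show "y = y'" by (metis dist_eq_0_iff dist_nz order_less_irrefl)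
  qed
  have "uniformly_continuous_on (range e) (inv e)"
    unfolding uniformly_continuous_on_def
  proof safe
    fix \<epsilon> :: real assume "\<epsilon> > 0"
    then obtain \<delta> where "\<delta> > 0" "\<forall>y y'. \<bar>e y - e y'\<bar> < \<delta> \<longrightarrow> dist y y' < \<epsilon>" using close by blast
    then show "\<exists>\<delta>>0. \<forall>x\<in>range e. \<forall>x'\<in>range e. dist x' x < \<delta> \<longrightarrow> dist (inv e x') (inv e x) < \<epsilon>"
      using inj by (auto simp: dist_real_def intro!: exI[of _ \<delta>])
  qed
  moreover have "e ` UNIV \<subseteq> {0..1}" unfolding e_def using tern_bounds by auto
  ultimately show ?thesis using that inj by blast
qed


lemma Lpow_sum:
  assumes fin: "\<And>x y. finite (g x -` {y})"
  shows "\<exists>P W. finite P \<and> (\<forall>z. W z \<ge> 0) \<and> (\<forall>\<psi>. Lpow f g \<phi> n x \<psi> y = (\<Sum>z\<in>P. W z * \<psi> z))"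
proof (induction n arbitrary: y)
  case 0
  show ?case by (intro exI[of _ "{y}"] exI[of _ "\<lambda>_. 1"]) simp
next
  case (Suc n)
  from Suc obtain P W where PW: "\<And>y1. finite (P y1)" "\<And>y1 z. W y1 z \<ge> 0"
     "\<And>y1 \<psi>. Lpow f g \<phi> n x \<psi> y1 = (\<Sum>z\<in>P y1. W y1 z * \<psi> z)" by metis
  define Q where "Q = g ((f^^n) x) -` {y}"
  define P' where "P' = \<Union> (P ` Q)"
  define ex where "ex y1 = exp (\<phi> ((f^^n) x, y1))" for y1
  define W' where "W' z = (\<Sum>y1\<in>Q. ex y1 * (if z \<in> P y1 then W y1 z else 0))" for z
  have Qf: "finite Q" unfolding Q_def by (rule fin)
  have P'f: "finite P'" unfolding P'_def using Qf PW(1) by auto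
  have W'0: "W' z \<ge> 0" for z unfolding W'_def ex_def using PW(2) by (intro sum_nonneg) auto
  have "Lpow f g \<phi> (Suc n) x \<psi> y = (\<Sum>z\<in>P'. W' z * \<psi> z)" for \<psi>
  proof -
    have "Lpow f g \<phi> (Suc n) x \<psi> y = (\<Sum>y1\<in>Q. ex y1 * (\<Sum>z\<in>P y1. W y1 z * \<psi> z))"
      by (simp add: Lop_def Q_def ex_def PW(3))
    also have "\<dots> = (\<Sum>y1\<in>Q. \<Sum>z\<in>P'. ex y1 * ((if z \<in> P y1 then W y1 z else 0) * \<psi> z))"
    proof (rule sum.cong[OF refl])
      fix y1 assume y1: "y1 \<in> Q"
      have "P' \<inter> P y1 = P y1" using y1 unfolding P'_def by auto
      then have "(\<Sum>z\<in>P y1. W y1 z * \<psi> z) = (\<Sum>z\<in>P'. if z \<in> P y1 then W y1 z * \<psi> z else 0)"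
        using sum.inter_restrict[OF P'f, of "\<lambda>z. W y1 z * \<psi> z" "P y1"] by simp
      then show "ex y1 * (\<Sum>z\<in>P y1. W y1 z * \<psi> z) = (\<Sum>z\<in>P'. ex y1 * ((if z \<in> P y1 then W y1 z else 0) * \<psi> z))"
        by (simp add: sum_distrib_left) (auto intro!: sum.cong)
    qed
    also have "\<dots> = (\<Sum>z\<in>P'. \<Sum>y1\<in>Q. ex y1 * ((if z \<in> P y1 then W y1 z else 0) * \<psi> z))"
      by (rule sum.swap)
    also have "\<dots> = (\<Sum>z\<in>P'. W' z * \<psi> z)"
      unfolding W'_def by (simp add: sum_distrib_right mult.assoc)
    finally show ?thesis .
  qed
  then show ?case using P'f W'0 by blast
qed

lemma limit_measure:
  fixes P :: "nat \<Rightarrow> 'y::metric_space set" and W :: "nat \<Rightarrow> 'y \<Rightarrow> real"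
  assumes cpt: "compact (UNIV::'y set)"
    and P: "\<And>n. finite (P n)" and W: "\<And>n z. W n z \<ge> 0" and Z: "\<And>n. (\<Sum>z\<in>P n. W n z) = 1"
  shows "\<exists>\<nu> r. prob_space \<nu> \<and> sets \<nu> = sets borel \<and> strict_mono r \<and>
     (\<forall>\<psi>. continuous_on UNIV \<psi> \<longrightarrow> (\<lambda>k. \<Sum>z\<in>P (r k). W (r k) z * \<psi> z) \<longlonglongrightarrow> (\<integral>y. \<psi> y \<partial>\<nu>))"
proof -
  obtain e :: "'y \<Rightarrow> real" where e: "inj e" "e ` UNIV \<subseteq> {0..1}" "uniformly_continuous_on (range e) (inv e)"
    using encoding[OF cpt] by blast
  define S where "S = closure (range e)"
  obtain p where p: "continuous_on S p" "\<And>t. t \<in> range e \<Longrightarrow> p t = inv e t"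
    using ucont_ext_compact[OF e(3) cpt] unfolding S_def by blast
  have pe: "p (e y) = y" for y
  proof -
    have "p (e y) = inv e (e y)" by (rule p(2)) (rule rangeI)
    then show ?thesis using inv_f_f[OF e(1)] by simp
  qed
  have eS: "e y \<in> S" for y unfolding S_def using closure_subset[of "range e"] by (meson rangeI subsetD)
  have Sc: "closed S" unfolding S_def by simp
  have Sne: "S \<noteq> {}" using eS by blast
  define pm where "pm n = point_measure (P n) (\<lambda>z. ennreal (W n z))" for n
  have pmp: "prob_space (pm n)" for n
    unfolding pm_def by (rule prob_space_point_measure) (use P W Z in \<open>auto simp: sum_ennreal\<close>)
  define \<mu> where "\<mu> n = distr (pm n) borel e" for n
  have em: "e \<in> measurable (pm n) borel" for n unfolding pm_def by simp
  have rd: "real_distribution (\<mu> n)" for n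
    unfolding real_distribution_def real_distribution_axioms_def \<mu>_def
    using prob_space.prob_space_distr[OF pmp em] by simp
  have intmu: "integral\<^sup>L (\<mu> n) G = (\<Sum>z\<in>P n. W n z * G (e z))" if "G \<in> borel_measurable borel" for G n
  proof -
    have "integral\<^sup>L (\<mu> n) G = integral\<^sup>L (pm n) (\<lambda>z. G (e z))"
      unfolding \<mu>_def by (rule integral_distr[OF em that])
    also have "\<dots> = (\<Sum>z\<in>P n. W n z * G (e z))"
      unfolding pm_def by (subst lebesgue_integral_point_measure_finite) (use P W in auto)
    finally show ?thesis .
  qed
  have tight: "tight \<mu>"
    unfolding tight_def
  proof (intro conjI allI impI)
    fix n show "real_distribution (\<mu> n)" by (rule rd)
  next
    fix \<epsilon> :: real assume "\<epsilon> > 0"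
    have "measure (\<mu> n) {-1<..2} = 1" for n
    proof -
      have "measure (\<mu> n) {-1<..2} = measure (pm n) (e -` {-1<..2} \<inter> space (pm n))"
        unfolding \<mu>_def by (rule measure_distr[OF em]) simp
      also have "e -` {-1<..2} \<inter> space (pm n) = space (pm n)"
      proof -
        have "e y \<in> {-1<..2}" for y
        proof -
          have "e y \<in> {0..1}" using e(2) by blast
          then show ?thesis by simp
        qed
        then show ?thesis by auto
      qed
      also have "measure (pm n) (space (pm n)) = 1" using prob_space.prob_space[OF pmp] .
      finally show ?thesis .
    qed
    then show "\<exists>a b. a < b \<and> (\<forall>n. 1 - \<epsilon> < measure (\<mu> n) {a<..b})"
      using \<open>\<epsilon> > 0\<close> by (intro exI[of _ "-1"] exI[of _ 2]) auto
  qed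
  obtain r M where r: "strict_mono r" "real_distribution M" "weak_conv_m (\<mu> \<circ> id \<circ> r) M"
    using tight_imp_convergent_subsubsequence[OF tight, of id] by (auto simp: strict_mono_def)
  have wc: "weak_conv_m (\<lambda>k. \<mu> (r k)) M" using r(3) by (simp add: comp_def)
  interpret M: real_distribution M by (rule r(2))
  have conv: "(\<lambda>k. integral\<^sup>L (\<mu> (r k)) G) \<longlonglongrightarrow> integral\<^sup>L M G"
    if "continuous_on UNIV G" "\<And>t. \<bar>G t\<bar> \<le> B" for G :: "real \<Rightarrow> real" and B
    by (rule weak_conv_imp_integral_bdd_continuous_conv[OF rd r(2) wc, of G B])
       (use that in \<open>auto simp: continuous_on_eq_continuous_at\<close>)
  define h where "h t = min 1 (infdist t S)" for t
  have hc: "continuous_on UNIV h" unfolding h_def by (intro continuous_intros)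
  have hb: "\<bar>h t\<bar> \<le> 1" for t unfolding h_def using infdist_nonneg[of t S] by auto
  have hm: "h \<in> borel_measurable borel" by (rule borel_measurable_continuous_onI[OF hc])
  have h0: "integral\<^sup>L (\<mu> n) h = 0" for n
    unfolding intmu[OF hm] h_def using in_closed_iff_infdist_zero[OF Sc Sne] eS by simp
  have "(\<lambda>k. integral\<^sup>L (\<mu> (r k)) h) \<longlonglongrightarrow> integral\<^sup>L M h" by (rule conv[OF hc hb])
  then have "integral\<^sup>L M h = 0" unfolding h0 by (simp add: LIMSEQ_const_iff)
  moreover have "integrable M h"
    by (rule M.integrable_const_bound[of _ 1]) (use hb hm in auto)
  moreover have "AE t in M. 0 \<le> h t" by (simp add: h_def infdist_nonneg)
  ultimately have "AE t in M. h t = 0"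
    using integral_nonneg_eq_0_iff_AE[of M h] by simp
  then have AES: "AE t in M. t \<in> S"
    by eventually_elim (simp add: h_def in_closed_iff_infdist_zero[OF Sc Sne] min_def split: if_splits)
  define p' where "p' t = (if t \<in> S then p t else p (e undefined))" for t
  have Sb: "{x \<in> space borel. x \<in> S} \<in> sets borel" using Sc by simp
  have pm1: "p \<in> borel_measurable (restrict_space borel {x. x \<in> S})"
    using borel_measurable_continuous_on_restrict[OF p(1)] by simp
  have pm2: "(\<lambda>t. p (e undefined)) \<in> borel_measurable (restrict_space borel {x. x \<notin> S})"
    by (rule measurable_const) simp
  have p'm: "p' \<in> borel_measurable borel"
    unfolding p'_def by (rule measurable_If_restrict_space_iff[THEN iffD2, OF Sb]) (use pm1 pm2 in blast)
  have "measurable M borel = measurable borel (borel::'y measure)"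
    by (rule measurable_cong_sets) simp_all
  then have p'M: "p' \<in> measurable M borel" using p'm by simp
  define \<nu> where "\<nu> = distr M borel p'"
  have nup: "prob_space \<nu>" unfolding \<nu>_def by (rule M.prob_space_distr[OF p'M])
  have nus: "sets \<nu> = sets borel" unfolding \<nu>_def by simp
  have "(\<lambda>k. \<Sum>z\<in>P (r k). W (r k) z * \<psi> z) \<longlonglongrightarrow> (\<integral>y. \<psi> y \<partial>\<nu>)" if \<psi>c: "continuous_on UNIV \<psi>" for \<psi> :: "'y \<Rightarrow> real"
  proof -
    have "compact (range \<psi>)" by (rule compact_continuous_image[OF \<psi>c cpt])
    then obtain B where B: "\<And>y. \<bar>\<psi> y\<bar> \<le> B"
      using compact_imp_bounded[of "range \<psi>"] unfolding bounded_iff by auto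
    have B0: "B \<ge> 0" using B[of undefined] by simp
    have cps: "continuous_on S (\<psi> \<circ> p)"
      by (rule continuous_on_compose[OF p(1)]) (rule continuous_on_subset[OF \<psi>c], simp)
    obtain G where G: "continuous_on UNIV G" "\<And>t. t \<in> S \<Longrightarrow> G t = (\<psi> \<circ> p) t" "\<And>t. norm (G t) \<le> B"
      using Tietze[OF cps, of UNIV B] Sc B0 B by auto
    have Gm: "G \<in> borel_measurable borel" by (rule borel_measurable_continuous_onI[OF G(1)])
    have Ge: "G (e z) = \<psi> z" for z using G(2)[OF eS[of z]] pe by simp
    have "(\<lambda>k. integral\<^sup>L (\<mu> (r k)) G) \<longlonglongrightarrow> integral\<^sup>L M G"
      by (rule conv[OF G(1), of B]) (use G(3) in auto)
    moreover have "integral\<^sup>L (\<mu> (r k)) G = (\<Sum>z\<in>P (r k). W (r k) z * \<psi> z)" for k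
      unfolding intmu[OF Gm] Ge ..
    moreover have "integral\<^sup>L M G = (\<integral>y. \<psi> y \<partial>\<nu>)"
    proof -
      have \<psi>m: "\<psi> \<in> borel_measurable borel" by (rule borel_measurable_continuous_onI[OF \<psi>c])
      have "(\<integral>y. \<psi> y \<partial>\<nu>) = (\<integral>t. \<psi> (p' t) \<partial>M)"
        unfolding \<nu>_def by (rule integral_distr[OF p'M \<psi>m])
      also have "\<dots> = integral\<^sup>L M G"
      proof -
        have eqM: "borel_measurable M = (borel_measurable borel :: (real \<Rightarrow> real) set)"
          by (rule measurable_cong_sets) simp_all
        have m1: "(\<lambda>t. \<psi> (p' t)) \<in> borel_measurable M" by (rule measurable_compose[OF p'M \<psi>m])
        have m2: "G \<in> borel_measurable M" using Gm eqM by simp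
        show ?thesis
          by (rule integral_cong_AE[OF m1 m2]) (use AES in \<open>eventually_elim, simp add: p'_def G(2)\<close>)
      qed
      finally show ?thesis by simp
    qed
    ultimately show ?thesis by simp
  qed
  then show ?thesis using nup nus r(1) by blast
qed


context coneset
begin

lemma LP_cont: "\<psi> \<in> hcone \<alpha> K \<Longrightarrow> continuous_on UNIV (LP n x \<psi>)"
  using holder_continuous[OF hcone_holder[OF LP_cone] al] by blast

lemma LP_meas: "\<psi> \<in> hcone \<alpha> K \<Longrightarrow> LP n x \<psi> \<in> borel_measurable borel"
  by (rule borel_measurable_continuous_onI[OF LP_cont])

lemma LP_bdd: "\<psi> \<in> hcone \<alpha> K \<Longrightarrow> \<exists>B. \<forall>y. \<bar>LP n x \<psi> y\<bar> \<le> B"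
proof -
  assume h: "\<psi> \<in> hcone \<alpha> K"
  have "LP n x \<psi> y \<le> Sup (range (LP n x \<psi>))" for y
    using hcone_Sup_ge[OF LP_cone[OF h] bnd] al by simp
  then show ?thesis using hcone_nonneg[OF LP_cone[OF h]] by (intro exI[of _ "Sup (range (LP n x \<psi>))"]) auto
qed

lemma LP_one_pos: "LP n x one y \<ge> Inf (range (LP n x one))" "Inf (range (LP n x one)) > 0"
  using hcone_Inf_le[OF LP_cone[OF one_cone]] hcone_Inf_pos[OF LP_cone[OF one_cone] LP_one_nz bnd al] K
  by auto

lemma pt_bounds:
  assumes "Inv x \<psi> k a b" "k \<le> n"
  shows "a \<le> LP n x \<psi> y / LP n x one y" "LP n x \<psi> y / LP n x one y \<le> b"
proof -
  have p: "LP n x one y > 0" using LP_one_pos(1)[of n x y] LP_one_pos(2)[of n x] by linarith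
  show "a \<le> LP n x \<psi> y / LP n x one y" using pointwise(1)[OF assms, of y] p by (simp add: le_divide_eq)
  show "LP n x \<psi> y / LP n x one y \<le> b" using pointwise(2)[OF assms, of y] p by (simp add: divide_le_eq)
qed

lemma nu_bounds:
  assumes h: "\<psi> \<in> hcone \<alpha> K" and inv: "Inv x \<psi> k a b" "k \<le> n"
    and \<sigma>: "prob_space \<sigma>" "sets \<sigma> = sets borel"
  shows "a \<le> nu_int f g \<phi> x n \<sigma> \<psi>" "nu_int f g \<phi> x n \<sigma> \<psi> \<le> b"
proof -
  interpret prob_space \<sigma> by (rule \<sigma>(1))
  have integ: "integrable \<sigma> (LP n x u)" if hu: "u \<in> hcone \<alpha> K" for u
  proof -
    obtain B where B: "\<And>y. \<bar>LP n x u y\<bar> \<le> B" using LP_bdd[OF hu] by blast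
    have "borel_measurable \<sigma> = (borel_measurable borel :: ('y \<Rightarrow> real) set)"
      by (rule measurable_cong_sets) (simp_all add: \<sigma>(2))
    then have m: "LP n x u \<in> borel_measurable \<sigma>"
      using LP_meas[OF hu] by simp
    show ?thesis by (rule integrable_const_bound[of _ B]) (use B m in auto)
  qed
  have iA: "integrable \<sigma> (LP n x \<psi>)" by (rule integ[OF h])
  have iO: "integrable \<sigma> (LP n x one)" by (rule integ[OF one_cone])
  have Opos: "(\<integral>y. LP n x one y \<partial>\<sigma>) > 0"
  proof -
    have "(\<integral>y. Inf (range (LP n x one)) \<partial>\<sigma>) \<le> (\<integral>y. LP n x one y \<partial>\<sigma>)"
      by (rule integral_mono[OF _ iO]) (use LP_one_pos in auto)
    then show ?thesis using LP_one_pos(2)[of n x] prob_space by simp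
  qed
  have "(\<integral>y. a * LP n x one y \<partial>\<sigma>) \<le> (\<integral>y. LP n x \<psi> y \<partial>\<sigma>)"
    by (rule integral_mono[OF _ iA]) (use pointwise(1)[OF inv] iO in auto)
  then have lo: "a * (\<integral>y. LP n x one y \<partial>\<sigma>) \<le> (\<integral>y. LP n x \<psi> y \<partial>\<sigma>)" by simp
  have "(\<integral>y. LP n x \<psi> y \<partial>\<sigma>) \<le> (\<integral>y. b * LP n x one y \<partial>\<sigma>)"
    by (rule integral_mono[OF iA]) (use pointwise(2)[OF inv] iO in auto)
  then have hi: "(\<integral>y. LP n x \<psi> y \<partial>\<sigma>) \<le> b * (\<integral>y. LP n x one y \<partial>\<sigma>)" by simp
  show "a \<le> nu_int f g \<phi> x n \<sigma> \<psi>" unfolding nu_int_def using lo Opos by (simp add: le_divide_eq)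
  show "nu_int f g \<phi> x n \<sigma> \<psi> \<le> b" unfolding nu_int_def using hi Opos by (simp add: divide_le_eq)
qed

lemma width:
  fixes \<psi> :: "'y \<Rightarrow> real"
  assumes h: "\<psi> \<in> hcone \<alpha> K"
  shows "Sup (range \<psi>) + Inf (range \<psi>) \<le> 2 * sup_norm \<psi>"
proof -
  have "Inf (range \<psi>) \<le> Sup (range \<psi>)"
    using hcone_Inf_le[OF h, of undefined] hcone_Sup_ge[OF h bnd, of undefined] al by simp
  moreover have "(\<lambda>a. \<bar>\<psi> a\<bar>) = \<psi>" using hcone_nonneg[OF h] by auto
  then have "sup_norm \<psi> = Sup (range \<psi>)" unfolding sup_norm_def by metis
  ultimately show ?thesis by simp
qed

end


theorem proposition3p6:
  fixes f :: "'x::metric_space \<Rightarrow> 'x" and g :: "'x \<Rightarrow> 'y::metric_space \<Rightarrow> 'y"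
    and \<gamma> :: real and d :: nat and Lf :: "'x \<times> 'y \<Rightarrow> real" and Lc :: real
    and A :: "('x \<times> 'y) set" and \<U> :: "('x \<times> 'y) set set" and q :: nat
    and \<phi> :: "'x \<times> 'y \<Rightarrow> real" and \<alpha> \<epsilon> K :: real
  assumes setting: "standing_setting f g \<gamma> d Lf Lc A \<U> q \<phi> \<alpha> \<epsilon>"
    and K_pos: "K > 0"
    and K_inv: "\<forall>x. \<forall>\<psi>\<in>hcone \<alpha> K.
                  Lop g \<phi> x \<psi> \<in> hcone \<alpha> (zeta_const TYPE('y) \<epsilon> d q \<gamma> Lc \<alpha> * K)"
  shows "\<exists>C1 > 0. \<exists>\<tau>. 0 < \<tau> \<and> \<tau> < 1 \<and>
    (\<forall>x. \<forall>\<sigma> :: nat \<Rightarrow> 'y measure.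
       (\<forall>n. prob_space (\<sigma> n) \<and> sets (\<sigma> n) = sets borel) \<longrightarrow>
         (\<forall>k m n. \<forall>\<psi>\<in>hcone \<alpha> K. k \<le> m \<longrightarrow> k \<le> n \<longrightarrow>
            \<bar>nu_int f g \<phi> x n (\<sigma> n) \<psi> - nu_int f g \<phi> x m (\<sigma> m) \<psi>\<bar>
              \<le> C1 * sup_norm \<psi> * \<tau> ^ k)
       \<and> (\<exists>\<nu> :: 'y measure. prob_space \<nu> \<and> sets \<nu> = sets borel \<and>
            (\<forall>\<psi>\<in>hcone \<alpha> K.
               (\<lambda>n. nu_int f g \<phi> x n (\<sigma> n) \<psi>) \<longlonglongrightarrow> (\<integral>y. \<psi> y \<partial>\<nu>)) \<and>
            (\<forall>n. \<forall>\<psi>\<in>hcone \<alpha> K.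
               \<bar>nu_int f g \<phi> x n (\<sigma> n) \<psi> - (\<integral>y. \<psi> y \<partial>\<nu>)\<bar> \<le> C1 * sup_norm \<psi> * \<tau> ^ n)))"
proof -
  have ss: "compact_conn_geodesic_space TYPE('y)" and fin0: "\<forall>x y. finite (g x -` {y}) \<and> card (g x -` {y}) = d"
    and qd: "q < d" and al: "0 < \<alpha>" "\<alpha> < 1" and zl: "zeta_const TYPE('y) \<epsilon> d q \<gamma> Lc \<alpha> < 1"
    using setting unfolding standing_setting_def by auto
  have cpt: "compact (UNIV::'y set)" using ss unfolding compact_conn_geodesic_space_def by auto
  have bnd: "bounded (UNIV::'y set)" by (rule compact_imp_bounded[OF cpt])
  define \<zeta> where "\<zeta> = zeta_const TYPE('y) \<epsilon> d q \<gamma> Lc \<alpha>"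
  define z where "z = max 0 \<zeta>"
  have z: "0 \<le> z" "z < 1" using zl unfolding z_def \<zeta>_def by auto
  have fin: "\<And>x y. finite (g x -` {y})" using fin0 by auto
  have ne: "g x -` {y} \<noteq> {}" for x y
  proof
    assume "g x -` {y} = {}"
    then have "d = 0" using fin0 by (metis card.empty)
    then show False using qd by simp
  qed
  interpret cs: coneset f g \<phi> \<alpha> K z
  proof
    show "bounded (UNIV::'y set)" by (rule bnd)
    show "0 < \<alpha>" by (rule al(1))
    show "0 \<le> z" by (rule z(1))
    show "z < 1" by (rule z(2))
    show "0 < K" by (rule K_pos)
  next
    fix x and \<psi> :: "'y \<Rightarrow> real" assume h: "\<psi> \<in> hcone \<alpha> K"
    have "Lop g \<phi> x \<psi> \<in> hcone \<alpha> (\<zeta> * K)" using K_inv h unfolding \<zeta>_def by blast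
    then show "Lop g \<phi> x \<psi> \<in> hcone \<alpha> (z * K)"
      by (rule hcone_mono) (use K_pos in \<open>simp add: z_def mult_right_mono\<close>)
  next
    fix x and \<psi> :: "'y \<Rightarrow> real" assume h: "\<psi> \<in> hcone \<alpha> K" and nz: "\<psi> \<noteq> (\<lambda>_. 0)"
    have pos: "\<And>y. \<psi> y > 0" using hcone_cases[OF h] nz by auto
    show "Lop g \<phi> x \<psi> \<noteq> (\<lambda>_. 0)"
    proof
      assume "Lop g \<phi> x \<psi> = (\<lambda>_. 0)"
      then have "Lop g \<phi> x \<psi> undefined = 0" by simp
      moreover have "Lop g \<phi> x \<psi> undefined > 0" unfolding Lop_def
        by (rule sum_pos[OF fin ne]) (simp add: pos)
      ultimately show False by simp
    qed
  qed
  have main: "(\<forall>k m n. \<forall>\<psi>\<in>hcone \<alpha> K. k \<le> m \<longrightarrow> k \<le> n \<longrightarrow>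
            \<bar>nu_int f g \<phi> x n (\<sigma> n) \<psi> - nu_int f g \<phi> x m (\<sigma> m) \<psi>\<bar>
              \<le> 2 * sup_norm \<psi> * cs.\<theta> ^ k)
       \<and> (\<exists>\<nu> :: 'y measure. prob_space \<nu> \<and> sets \<nu> = sets borel \<and>
            (\<forall>\<psi>\<in>hcone \<alpha> K.
               (\<lambda>n. nu_int f g \<phi> x n (\<sigma> n) \<psi>) \<longlonglongrightarrow> (\<integral>y. \<psi> y \<partial>\<nu>)) \<and>
            (\<forall>n. \<forall>\<psi>\<in>hcone \<alpha> K.
               \<bar>nu_int f g \<phi> x n (\<sigma> n) \<psi> - (\<integral>y. \<psi> y \<partial>\<nu>)\<bar> \<le> 2 * sup_norm \<psi> * cs.\<theta> ^ n))"
    if \<sigma>: "\<forall>n. prob_space (\<sigma> n) \<and> sets (\<sigma> n) = sets borel" for x \<sigma>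
  proof -
    have AB: "\<exists>a b. \<forall>k. cs.Inv x \<psi> k (a k) (b k) \<and> b k - a k \<le> 2 * sup_norm \<psi> * cs.\<theta> ^ k"
      if h: "\<psi> \<in> hcone \<alpha> K" for \<psi>
    proof -
      obtain a b where ab: "\<And>k. cs.Inv x \<psi> k (a k) (b k) \<and> b k - a k \<le> (Sup (range \<psi>) + Inf (range \<psi>)) * cs.\<theta> ^ k"
        using cs.core[OF h] by blast
      have "(Sup (range \<psi>) + Inf (range \<psi>)) * cs.\<theta> ^ k \<le> 2 * sup_norm \<psi> * cs.\<theta> ^ k" for k
        using cs.width[OF h] cs.theta_bounds by (intro mult_right_mono) auto
      then have "\<forall>k. cs.Inv x \<psi> k (a k) (b k) \<and> b k - a k \<le> 2 * sup_norm \<psi> * cs.\<theta> ^ k"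
        using ab by (meson order_trans)
      then show ?thesis by blast
    qed
    have nb: "a k \<le> nu_int f g \<phi> x n (\<sigma> n) \<psi> \<and> nu_int f g \<phi> x n (\<sigma> n) \<psi> \<le> b k"
      if "\<psi> \<in> hcone \<alpha> K" "cs.Inv x \<psi> k (a k) (b k)" "k \<le> n" for \<psi> a b k n
      using cs.nu_bounds[OF that, of "\<sigma> n"] \<sigma> by auto
    have part1: "\<forall>k m n. \<forall>\<psi>\<in>hcone \<alpha> K. k \<le> m \<longrightarrow> k \<le> n \<longrightarrow>
            \<bar>nu_int f g \<phi> x n (\<sigma> n) \<psi> - nu_int f g \<phi> x m (\<sigma> m) \<psi>\<bar>
              \<le> 2 * sup_norm \<psi> * cs.\<theta> ^ k"
    proof (intro allI ballI impI)
      fix k m n :: nat and \<psi> :: "'y \<Rightarrow> real" assume h: "\<psi> \<in> hcone \<alpha> K" and km: "k \<le> m" and kn: "k \<le> n"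
      obtain a b where ab: "\<And>k. cs.Inv x \<psi> k (a k) (b k) \<and> b k - a k \<le> 2 * sup_norm \<psi> * cs.\<theta> ^ k"
        using AB[OF h] by blast
      have "a k \<le> nu_int f g \<phi> x n (\<sigma> n) \<psi> \<and> nu_int f g \<phi> x n (\<sigma> n) \<psi> \<le> b k"
        by (rule nb[OF h _ kn]) (use ab in blast)
      moreover have "a k \<le> nu_int f g \<phi> x m (\<sigma> m) \<psi> \<and> nu_int f g \<phi> x m (\<sigma> m) \<psi> \<le> b k"
        by (rule nb[OF h _ km]) (use ab in blast)
      moreover have "b k - a k \<le> 2 * sup_norm \<psi> * cs.\<theta> ^ k" using ab by blast
      ultimately show "\<bar>nu_int f g \<phi> x n (\<sigma> n) \<psi> - nu_int f g \<phi> x m (\<sigma> m) \<psi>\<bar> \<le> 2 * sup_norm \<psi> * cs.\<theta> ^ k"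
        by linarith
    qed
    have ex: "\<forall>n. \<exists>pw. finite (fst pw) \<and> (\<forall>z. snd pw z \<ge> (0::real)) \<and> (\<forall>\<psi>. Lpow f g \<phi> n x \<psi> undefined = (\<Sum>z\<in>fst pw. snd pw z * \<psi> z))"
    proof
      fix n
      obtain P0 W0 where "finite P0 \<and> (\<forall>z. W0 z \<ge> (0::real)) \<and> (\<forall>\<psi>. Lpow f g \<phi> n x \<psi> undefined = (\<Sum>z\<in>P0. W0 z * \<psi> z))"
        using Lpow_sum[where g=g and f=f and \<phi>=\<phi> and n=n and x=x and y=undefined, OF fin] by (elim exE)
      then show "\<exists>pw. finite (fst pw) \<and> (\<forall>z. snd pw z \<ge> (0::real)) \<and> (\<forall>\<psi>. Lpow f g \<phi> n x \<psi> undefined = (\<Sum>z\<in>fst pw. snd pw z * \<psi> z))"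
        by (intro exI[of _ "(P0, W0)"]) simp
    qed
    obtain pw where pw: "\<And>n. finite (fst (pw n)) \<and> (\<forall>z. snd (pw n) z \<ge> (0::real)) \<and> (\<forall>\<psi>. Lpow f g \<phi> n x \<psi> undefined = (\<Sum>z\<in>fst (pw n). snd (pw n) z * \<psi> z))"
      using choice[OF ex] by blast
    define P where "P n = fst (pw n)" for n
    define W where "W n = snd (pw n)" for n
    have PW: "\<And>n. finite (P n)" "\<And>n z. W n z \<ge> 0"
      "\<And>n \<psi>. Lpow f g \<phi> n x \<psi> undefined = (\<Sum>z\<in>P n. W n z * \<psi> z)"
      using pw unfolding P_def W_def by auto
    define Zn where "Zn n = Lpow f g \<phi> n x (\<lambda>_. 1) undefined" for n
    have Znp: "Zn n > 0" for n
      using cs.LP_one_pos(1)[of n x undefined] cs.LP_one_pos(2)[of n x] unfolding Zn_def by linarith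
    have ZnW: "Zn n = (\<Sum>z\<in>P n. W n z)" for n unfolding Zn_def PW(3) by simp
    define W' where "W' n z = W n z / Zn n" for n z
    have W'0: "W' n z \<ge> 0" for n z unfolding W'_def using PW(2) Znp by (simp add: less_imp_le)
    have W'1: "(\<Sum>z\<in>P n. W' n z) = 1" for n
      unfolding W'_def using ZnW[of n] Znp[of n] by (simp add: sum_divide_distrib[symmetric])
    have W'\<psi>: "(\<Sum>z\<in>P n. W' n z * \<psi> z) = Lpow f g \<phi> n x \<psi> undefined / Lpow f g \<phi> n x (\<lambda>_. 1) undefined" for n \<psi>
      unfolding W'_def PW(3)[of n \<psi>] Zn_def[symmetric] by (simp add: sum_divide_distrib)
    obtain \<nu> r where \<nu>: "prob_space \<nu>" "sets \<nu> = sets borel" "strict_mono r"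
      "\<And>\<psi>. continuous_on UNIV \<psi> \<Longrightarrow> (\<lambda>k. \<Sum>z\<in>P (r k). W' (r k) z * \<psi> z) \<longlonglongrightarrow> (\<integral>y. \<psi> y \<partial>\<nu>)"
      using limit_measure[where P=P and W=W', OF cpt PW(1) W'0 W'1] by blast
    have lim_in: "a k \<le> (\<integral>y. \<psi> y \<partial>\<nu>) \<and> (\<integral>y. \<psi> y \<partial>\<nu>) \<le> b k"
      if h: "\<psi> \<in> hcone \<alpha> K" and inv: "\<And>k. cs.Inv x \<psi> k (a k) (b k)" for \<psi> a b k
    proof -
      have lim: "(\<lambda>j. Lpow f g \<phi> (r j) x \<psi> undefined / Lpow f g \<phi> (r j) x (\<lambda>_. 1) undefined) \<longlonglongrightarrow> (\<integral>y. \<psi> y \<partial>\<nu>)"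
        using \<nu>(4)[OF holder_continuous[OF hcone_holder[OF h] al(1)]] unfolding W'\<psi> .
      have rk: "k \<le> r j" if "k \<le> j" for j using seq_suble[OF \<nu>(3), of j] that by simp
      have "a k \<le> (\<integral>y. \<psi> y \<partial>\<nu>)"
        by (rule LIMSEQ_le_const[OF lim]) (use cs.pt_bounds(1)[OF inv rk] in blast)
      moreover have "(\<integral>y. \<psi> y \<partial>\<nu>) \<le> b k"
        by (rule LIMSEQ_le_const2[OF lim]) (use cs.pt_bounds(2)[OF inv rk] in blast)
      ultimately show ?thesis by simp
    qed
    have part2: "\<bar>nu_int f g \<phi> x n (\<sigma> n) \<psi> - (\<integral>y. \<psi> y \<partial>\<nu>)\<bar> \<le> 2 * sup_norm \<psi> * cs.\<theta> ^ n"
      if h: "\<psi> \<in> hcone \<alpha> K" for \<psi> n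
    proof -
      obtain a b where ab: "\<And>k. cs.Inv x \<psi> k (a k) (b k) \<and> b k - a k \<le> 2 * sup_norm \<psi> * cs.\<theta> ^ k"
        using AB[OF h] by blast
      have "a n \<le> nu_int f g \<phi> x n (\<sigma> n) \<psi> \<and> nu_int f g \<phi> x n (\<sigma> n) \<psi> \<le> b n"
        by (rule nb[OF h _ order_refl]) (use ab in blast)
      moreover have "a n \<le> (\<integral>y. \<psi> y \<partial>\<nu>) \<and> (\<integral>y. \<psi> y \<partial>\<nu>) \<le> b n"
        by (rule lim_in[OF h]) (use ab in blast)
      moreover have "b n - a n \<le> 2 * sup_norm \<psi> * cs.\<theta> ^ n" using ab by blast
      ultimately show ?thesis by linarith
    qed
    have conv: "(\<lambda>n. nu_int f g \<phi> x n (\<sigma> n) \<psi>) \<longlonglongrightarrow> (\<integral>y. \<psi> y \<partial>\<nu>)" if h: "\<psi> \<in> hcone \<alpha> K" for \<psi>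
    proof -
      have "(\<lambda>n. cs.\<theta> ^ n) \<longlonglongrightarrow> 0" using cs.theta_bounds by (intro LIMSEQ_power_zero) auto
      then have g0: "(\<lambda>n. 2 * sup_norm \<psi> * cs.\<theta> ^ n) \<longlonglongrightarrow> 0" by (rule tendsto_mult_right_zero)
      have "(\<lambda>n. nu_int f g \<phi> x n (\<sigma> n) \<psi> - (\<integral>y. \<psi> y \<partial>\<nu>)) \<longlonglongrightarrow> 0"
        by (rule Lim_null_comparison[OF _ g0]) (use part2[OF h] in auto)
      then show ?thesis by (simp add: LIM_zero_iff)
    qed
    show ?thesis using part1 \<nu>(1,2) conv part2 by blast
  qed
  show ?thesis
    by (intro exI[of _ "2::real"] conjI exI[of _ cs.\<theta>]) (use cs.theta_bounds main in auto)
qed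

end
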